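(* Let $G,H$ be graphs such that $G$ is connected, has at least five vertices and has no vertices of degree two. Let $\mathcal D$ be a weak disk system in $G$, let $S$ be a subgraph of $H$ isomorphic to a subdivision of $G$, let $\mathcal D'$ be the weak disk system induced in $S$ by $\mathcal D$, and suppose $H$ has an $S$-triad (with respect to $\mathcal D'$). Then $H$ has a minor isomorphic to a 1-enlargement or a 3-enlargement of $G$, or to a weak 8-enlargement or a weak 9-enlargement of $G$ (all with respect to $\mathcal D$).
   Context: Graphs are finite and simple; paths and cycles have no repeated vertices. A segment is a maximal path whose internal vertices have degree exactly two; if $S$ is a subdivision of a graph $G$ without degree-two vertices, the segments of $S$ are the paths replacing edges of $G$ and the branch-vertices are the vertices corresponding to $V(G)$. A cycle double cover of $G$ is a set $\mathcal D$ of distinct cycles (disks) with each edge in exactly two disks; it is a weak disk system if any two distinct disks intersect in at most one vertex or in a segment. Two elements (vertices or edges) are confluent if some disk contains both. The weak disk system induced in a subdivision $S$ of $G$ is obtained by replacing each edge of each disk by its segment. An $S$-triad in $H$ consists of a vertex $x\in V(H)-V(S)$ and three paths $L_1,L_2,L_3$ with common end $x$, having no internal vertices in common with each other or with $S$, where $L_i$ ends at $x_i\in V(S)$, and $x_1,x_2,x_3$ are distinct vertices that are pairwise confluent but not all three contained in one disk of $\mathcal D'$. Splitting: for a vertex $v$ of degree $\ge4$ and a partition $(N_1,N_2)$ of its neighbours with $|N_1|,|N_2|\ge2$, replace $v$ by adjacent new vertices $v_1,v_2$ with $v_i$ adjacent to $N_i$. The split is conforming (w.r.t. $\mathcal D$)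 if (S1) among the disks containing $v$ exactly two, $D_1,D_2$, have their two neighbours of $v$ one in $N_1$ and one in $N_2$, and (S2) $D_1\cap D_2=\{v\}$; otherwise non-conforming. A 1-enlargement of $G$ is obtained by adding an edge between two non-confluent vertices. A 3-enlargement is obtained by a non-conforming split of a vertex. A weak 8-enlargement is obtained by adding a new vertex adjacent to three vertices $x_1,x_2,x_3$ of $G$ not all contained in one disk. A weak 9-enlargement is obtained, for an edge $xy$ and a vertex $u$ such that no disk contains both $u$ and the edge $xy$, by subdividing $xy$ with a new vertex and joining it to $u$. *)

theory Defs
  imports Main
begin

type_synonym 'a ugr = "'a set \<times> 'a set set"

abbreviation verts :: "'a ugr \<Rightarrow> 'a set" where "verts G \<equiv> fst G"
abbreviation edges :: "'a ugr \<Rightarrow> 'a set set" where "edges G \<equiv> snd G"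

definition ugraph :: "'a ugr \<Rightarrow> bool" where
  "ugraph G \<longleftrightarrow> finite (verts G) \<and>
     (\<forall>e\<in>edges G. \<exists>u v. e = {u, v} \<and> u \<noteq> v \<and> u \<in> verts G \<and> v \<in> verts G)"

definition subgraph :: "'a ugr \<Rightarrow> 'a ugr \<Rightarrow> bool" where
  "subgraph S H \<longleftrightarrow> ugraph S \<and> verts S \<subseteq> verts H \<and> edges S \<subseteq> edges H"

definition nbrs :: "'a ugr \<Rightarrow> 'a \<Rightarrow> 'a set" where
  "nbrs G v = {u. {u, v} \<in> edges G}"

definition deg :: "'a ugr \<Rightarrow> 'a \<Rightarrow> nat" where
  "deg G v = card (nbrs G v)"

definition connected_set :: "'a ugr \<Rightarrow> 'a set \<Rightarrow> bool" where
  "connected_set G B \<longleftrightarrow>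
     (\<forall>u\<in>B. \<forall>v\<in>B. (\<lambda>a b. a \<in> B \<and> b \<in> B \<and> {a, b} \<in> edges G)\<^sup>*\<^sup>* u v)"

definition connected_graph :: "'a ugr \<Rightarrow> bool" where
  "connected_graph G \<longleftrightarrow> verts G \<noteq> {} \<and> connected_set G (verts G)"

definition is_path :: "'a ugr \<Rightarrow> 'a list \<Rightarrow> bool" where
  "is_path G p \<longleftrightarrow> length p \<ge> 2 \<and> distinct p \<and> set p \<subseteq> verts G \<and>
     (\<forall>i. Suc i < length p \<longrightarrow> {p ! i, p ! Suc i} \<in> edges G)"

definition path_edges :: "'a list \<Rightarrow> 'a set set" where
  "path_edges p = {{p ! i, p ! Suc i} | i. Suc i < length p}"

definition interior :: "'a list \<Rightarrow> 'a set" where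
  "interior p = set (butlast (tl p))"

definition deg2_path :: "'a ugr \<Rightarrow> 'a list \<Rightarrow> bool" where
  "deg2_path G p \<longleftrightarrow> is_path G p \<and> (\<forall>v\<in>interior p. deg G v = 2)"

definition is_segment :: "'a ugr \<Rightarrow> 'a list \<Rightarrow> bool" where
  "is_segment G p \<longleftrightarrow> deg2_path G p \<and>
     (\<forall>q. deg2_path G q \<and> path_edges p \<subseteq> path_edges q \<longrightarrow> path_edges q = path_edges p)"

text \<open>Cycles (disks) are represented by their edge sets: nonempty connected 2-regular subgraphs.\<close>

definition dverts :: "'a set set \<Rightarrow> 'a set" where
  "dverts C = \<Union>C"

definition is_cycle :: "'a ugr \<Rightarrow> 'a set set \<Rightarrow> bool" where
  "is_cycle G C \<longleftrightarrow> C \<noteq> {} \<and> C \<subseteq> edges G \<and>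
     (\<forall>v \<in> dverts C. card {e\<in>C. v \<in> e} = 2) \<and> connected_set (dverts C, C) (dverts C)"

definition cycle_double_cover :: "'a ugr \<Rightarrow> 'a set set set \<Rightarrow> bool" where
  "cycle_double_cover G D \<longleftrightarrow> (\<forall>C\<in>D. is_cycle G C) \<and>
     (\<forall>e\<in>edges G. card {C\<in>D. e \<in> C} = 2)"

definition weak_disk_system :: "'a ugr \<Rightarrow> 'a set set set \<Rightarrow> bool" where
  "weak_disk_system G D \<longleftrightarrow> cycle_double_cover G D \<and>
     (\<forall>C1\<in>D. \<forall>C2\<in>D. C1 \<noteq> C2 \<longrightarrow>
        card (dverts C1 \<inter> dverts C2) \<le> 1 \<or>
        (\<exists>p. is_segment G p \<and> dverts C1 \<inter> dverts C2 = set p \<and> C1 \<inter> C2 = path_edges p))"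

definition confluent :: "'a set set set \<Rightarrow> 'a \<Rightarrow> 'a \<Rightarrow> bool" where
  "confluent D x y \<longleftrightarrow> (\<exists>C\<in>D. x \<in> dverts C \<and> y \<in> dverts C)"

definition valid_split :: "'a ugr \<Rightarrow> 'a \<Rightarrow> 'a set \<Rightarrow> 'a set \<Rightarrow> bool" where
  "valid_split G v N1 N2 \<longleftrightarrow> v \<in> verts G \<and> deg G v \<ge> 4 \<and>
     N1 \<union> N2 = nbrs G v \<and> N1 \<inter> N2 = {} \<and> card N1 \<ge> 2 \<and> card N2 \<ge> 2"

definition conforming_split :: "'a ugr \<Rightarrow> 'a set set set \<Rightarrow> 'a \<Rightarrow> 'a set \<Rightarrow> 'a set \<Rightarrow> bool" where
  "conforming_split G D v N1 N2 \<longleftrightarrow>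
     (\<exists>D1 D2. D1 \<noteq> D2 \<and>
        {C\<in>D. v \<in> dverts C \<and> (\<exists>a\<in>N1. \<exists>b\<in>N2. {v, a} \<in> C \<and> {v, b} \<in> C)} = {D1, D2} \<and>
        dverts D1 \<inter> dverts D2 = {v})"

definition split_graph :: "'a ugr \<Rightarrow> 'a \<Rightarrow> 'a set \<Rightarrow> 'a set \<Rightarrow> ('a + bool) ugr" where
  "split_graph G v N1 N2 =
     (Inl ` (verts G - {v}) \<union> {Inr True, Inr False},
      (image Inl) ` {e\<in>edges G. v \<notin> e} \<union> {{Inr True, Inr False}} \<union>
      {{Inr True, Inl a} | a. a \<in> N1} \<union> {{Inr False, Inl b} | b. b \<in> N2})"

text \<open>Enlargements; new vertices are Inr True / Inr False, old vertices are Inl v.\<close>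

definition enlargement1 :: "'a ugr \<Rightarrow> 'a set set set \<Rightarrow> ('a + bool) ugr \<Rightarrow> bool" where
  "enlargement1 G D K \<longleftrightarrow> (\<exists>x y. x \<in> verts G \<and> y \<in> verts G \<and> x \<noteq> y \<and> \<not> confluent D x y \<and>
     K = (Inl ` verts G, (image Inl) ` edges G \<union> {{Inl x, Inl y}}))"

definition enlargement3 :: "'a ugr \<Rightarrow> 'a set set set \<Rightarrow> ('a + bool) ugr \<Rightarrow> bool" where
  "enlargement3 G D K \<longleftrightarrow> (\<exists>v N1 N2. valid_split G v N1 N2 \<and> \<not> conforming_split G D v N1 N2 \<and>
     K = split_graph G v N1 N2)"

definition weak_enlargement8 :: "'a ugr \<Rightarrow> 'a set set set \<Rightarrow> ('a + bool) ugr \<Rightarrow> bool" where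
  "weak_enlargement8 G D K \<longleftrightarrow> (\<exists>x1 x2 x3. x1 \<in> verts G \<and> x2 \<in> verts G \<and> x3 \<in> verts G \<and>
     x1 \<noteq> x2 \<and> x1 \<noteq> x3 \<and> x2 \<noteq> x3 \<and> \<not> (\<exists>C\<in>D. {x1, x2, x3} \<subseteq> dverts C) \<and>
     K = (Inl ` verts G \<union> {Inr True},
          (image Inl) ` edges G \<union> {{Inr True, Inl x1}, {Inr True, Inl x2}, {Inr True, Inl x3}}))"

definition weak_enlargement9 :: "'a ugr \<Rightarrow> 'a set set set \<Rightarrow> ('a + bool) ugr \<Rightarrow> bool" where
  "weak_enlargement9 G D K \<longleftrightarrow> (\<exists>x y u. {x, y} \<in> edges G \<and> u \<in> verts G \<and>
     \<not> (\<exists>C\<in>D. u \<in> dverts C \<and> {x, y} \<in> C) \<and>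
     K = (Inl ` verts G \<union> {Inr True},
          (image Inl) ` (edges G - {{x, y}}) \<union> {{Inr True, Inl x}, {Inr True, Inl y}, {Inr True, Inl u}}))"

definition has_minor :: "'b ugr \<Rightarrow> 'c ugr \<Rightarrow> bool" where
  "has_minor H K \<longleftrightarrow> (\<exists>B :: 'c \<Rightarrow> 'b set.
     (\<forall>a\<in>verts K. B a \<noteq> {} \<and> B a \<subseteq> verts H \<and> connected_set H (B a)) \<and>
     (\<forall>a\<in>verts K. \<forall>b\<in>verts K. a \<noteq> b \<longrightarrow> B a \<inter> B b = {}) \<and>
     (\<forall>e\<in>edges K. \<exists>a b h h'. e = {a, b} \<and> h \<in> B a \<and> h' \<in> B b \<and> {h, h'} \<in> edges H))"

text \<open>S is (isomorphic to) a subdivision of G, witnessed by the branch-vertex map phi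
  and the segments P e replacing the edges e of G.\<close>

definition subdivision_model :: "'a ugr \<Rightarrow> 'b ugr \<Rightarrow> ('a \<Rightarrow> 'b) \<Rightarrow> ('a set \<Rightarrow> 'b list) \<Rightarrow> bool" where
  "subdivision_model G S phi P \<longleftrightarrow> inj_on phi (verts G) \<and> phi ` verts G \<subseteq> verts S \<and>
     (\<forall>e\<in>edges G. is_path S (P e) \<and> {hd (P e), last (P e)} = phi ` e \<and>
        interior (P e) \<inter> phi ` verts G = {}) \<and>
     (\<forall>e\<in>edges G. \<forall>e'\<in>edges G. e \<noteq> e' \<longrightarrow> interior (P e) \<inter> set (P e') = {}) \<and>
     verts S = phi ` verts G \<union> (\<Union>e\<in>edges G. set (P e)) \<and>
     edges S = (\<Union>e\<in>edges G. path_edges (P e))"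

text \<open>Vertex set of the disk of the induced weak disk system corresponding to disk C.\<close>

definition induced_dverts :: "('a set \<Rightarrow> 'b list) \<Rightarrow> 'a set set \<Rightarrow> 'b set" where
  "induced_dverts P C = (\<Union>e\<in>C. set (P e))"

definition has_triad :: "'b ugr \<Rightarrow> 'b ugr \<Rightarrow> 'a set set set \<Rightarrow> ('a set \<Rightarrow> 'b list) \<Rightarrow> bool" where
  "has_triad H S D P \<longleftrightarrow> (\<exists>x (L :: nat \<Rightarrow> 'b list). x \<in> verts H - verts S \<and>
     (\<forall>i<3. is_path H (L i) \<and> hd (L i) = x \<and> last (L i) \<in> verts S \<and>
            interior (L i) \<inter> verts S = {}) \<and>
     (\<forall>i<3. \<forall>j<3. i \<noteq> j \<longrightarrow> interior (L i) \<inter> interior (L j) = {} \<and> last (L i) \<noteq> last (L j)) \<and>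
     (\<forall>i<3. \<forall>j<3. \<exists>C\<in>D. last (L i) \<in> induced_dverts P C \<and> last (L j) \<in> induced_dverts P C) \<and>
     \<not> (\<exists>C\<in>D. \<forall>i<3. last (L i) \<in> induced_dverts P C))"

end

theory Submission
  imports Defs
begin


lemma connected_set_sub_rel:
  assumes "(\<lambda>a b. a \<in> X \<and> b \<in> X \<and> {a, b} \<in> edges G)\<^sup>*\<^sup>* u v" "X \<subseteq> Y"
  shows "(\<lambda>a b. a \<in> Y \<and> b \<in> Y \<and> {a, b} \<in> edges G)\<^sup>*\<^sup>* u v"
  using assms(1)
proof (induction rule: rtranclp_induct)
  case base then show ?case by simp
next
  case (step y z) then show ?case using assms(2)
    by (metis (mono_tags, lifting) rtranclp.rtrancl_into_rtrancl subsetD)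
qed

lemma connected_star_union:
  assumes "\<And>X. X \<in> F \<Longrightarrow> connected_set G X \<and> c \<in> X"
  shows "connected_set G (insert c (\<Union>F))"
proof -
  let ?U = "insert c (\<Union>F)"
  have h: "(\<lambda>a b. a \<in> ?U \<and> b \<in> ?U \<and> {a, b} \<in> edges G)\<^sup>*\<^sup>* u c \<and>
           (\<lambda>a b. a \<in> ?U \<and> b \<in> ?U \<and> {a, b} \<in> edges G)\<^sup>*\<^sup>* c u" if uU: "u \<in> ?U" for u
  proof (cases "u = c")
    case True then show ?thesis by simp
  next
    case False
    then obtain X where X: "X \<in> F" "u \<in> X" using uU False by auto
    have cX: "connected_set G X" "c \<in> X" using assms X(1) by auto
    have sub: "X \<subseteq> ?U" using X by auto
    have "(\<lambda>a b. a \<in> X \<and> b \<in> X \<and> {a, b} \<in> edges G)\<^sup>*\<^sup>* u c"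
         "(\<lambda>a b. a \<in> X \<and> b \<in> X \<and> {a, b} \<in> edges G)\<^sup>*\<^sup>* c u"
      using cX X(2) unfolding connected_set_def by auto
    note uc = this
    show ?thesis using connected_set_sub_rel[OF uc(1) sub] connected_set_sub_rel[OF uc(2) sub] by blast
  qed
  show ?thesis unfolding connected_set_def
  proof (intro ballI)
    fix u v assume "u \<in> ?U" "v \<in> ?U"
    then show "(\<lambda>a b. a \<in> ?U \<and> b \<in> ?U \<and> {a, b} \<in> edges G)\<^sup>*\<^sup>* u v"
      using h[of u] h[of v] rtranclp_trans[of _ u c v] by blast
  qed
qed

definition chain :: "'b ugr \<Rightarrow> 'b list \<Rightarrow> bool" where
  "chain H p \<longleftrightarrow> (\<forall>i. Suc i < length p \<longrightarrow> {p ! i, p ! Suc i} \<in> edges H)"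

lemma chain_connected:
  assumes "chain H p" "p \<noteq> []"
  shows "connected_set H (set p)"
proof -
  let ?r = "\<lambda>a b. a \<in> set p \<and> b \<in> set p \<and> {a, b} \<in> edges H"
  have k: "?r\<^sup>*\<^sup>* (p!0) (p!j) \<and> ?r\<^sup>*\<^sup>* (p!j) (p!0)" if "j < length p" for j
    using that
  proof (induction j)
    case 0 then show ?case by simp
  next
    case (Suc j)
    have e: "{p!j, p!Suc j} \<in> edges H" using assms(1) Suc.prems unfolding chain_def by auto
    have m: "p!j \<in> set p" "p!Suc j \<in> set p" using Suc.prems by auto
    have r1: "?r (p!j) (p!Suc j)" using e m by auto
    have r2: "?r (p!Suc j) (p!j)" using e m by (auto simp: insert_commute)
    have ih: "?r\<^sup>*\<^sup>* (p!0) (p!j)" "?r\<^sup>*\<^sup>* (p!j) (p!0)" using Suc by auto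
    have a1: "?r\<^sup>*\<^sup>* (p!0) (p!Suc j)" using ih(1) r1 by (rule rtranclp.rtrancl_into_rtrancl)
    have a2: "?r\<^sup>*\<^sup>* (p!Suc j) (p!0)" using r2 ih(2) by (rule converse_rtranclp_into_rtranclp)
    show ?case using a1 a2 by blast
  qed
  show ?thesis unfolding connected_set_def
    by (metis (no_types, lifting) in_set_conv_nth k rtranclp_trans)
qed

lemma chain_take: "chain H p \<Longrightarrow> chain H (take l p)"
  unfolding chain_def by auto

lemma chain_drop: "chain H p \<Longrightarrow> chain H (drop m p)"
  unfolding chain_def by (auto simp: add.commute)

lemma path_chain: "is_path H p \<Longrightarrow> chain H p"
  unfolding is_path_def chain_def by auto

lemma chain_mono: "chain S p \<Longrightarrow> edges S \<subseteq> edges H \<Longrightarrow> chain H p"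
  unfolding chain_def by auto




lemma ugraph_edge:
  assumes "ugraph G" "e \<in> edges G"
  obtains u v where "e = {u, v}" "u \<noteq> v" "u \<in> verts G" "v \<in> verts G"
  using assms unfolding ugraph_def by blast

lemma edge_sub: "ugraph G \<Longrightarrow> e \<in> edges G \<Longrightarrow> e \<subseteq> verts G"
  by (metis ugraph_edge empty_subsetI insert_subset)

lemma nbrs_iff: "u \<in> nbrs G v \<longleftrightarrow> {u, v} \<in> edges G"
  unfolding nbrs_def by simp

lemma nbrs_sub: "ugraph G \<Longrightarrow> nbrs G v \<subseteq> verts G"
  unfolding nbrs_def using edge_sub by fastforce

lemma nbrs_finite: "ugraph G \<Longrightarrow> finite (nbrs G v)"
  using nbrs_sub ugraph_def finite_subset by metis

lemma dverts_sub: "ugraph G \<Longrightarrow> C \<subseteq> edges G \<Longrightarrow> dverts C \<subseteq> verts G"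
  unfolding dverts_def using edge_sub by blast

lemma wds_cycle: "weak_disk_system G D \<Longrightarrow> C \<in> D \<Longrightarrow> C \<subseteq> edges G"
  unfolding weak_disk_system_def cycle_double_cover_def is_cycle_def by blast

lemma in_dverts: "e \<in> C \<Longrightarrow> v \<in> e \<Longrightarrow> v \<in> dverts C"
  unfolding dverts_def by blast

lemma len2_list: "length p = 2 \<Longrightarrow> \<exists>a b. p = [a, b]"
  by (cases p; cases "tl p") auto

lemma path_edges2: "path_edges [a, b] = {{a, b}}"
  unfolding path_edges_def
proof -
  have "{i. Suc i < length [a, b]} = {0}" by auto
  then show "{{[a, b] ! i, [a, b] ! Suc i} |i. Suc i < length [a, b]} = {{a, b}}" by auto
qed



lemma disk_inter:
  assumes G: "ugraph G" "weak_disk_system G D" "\<forall>v\<in>verts G. deg G v \<noteq> 2"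
    and C: "C \<in> D" "C' \<in> D" "C \<noteq> C'"
    and xy: "x \<noteq> y" "x \<in> dverts C" "y \<in> dverts C" "x \<in> dverts C'" "y \<in> dverts C'"
  shows "dverts C \<inter> dverts C' = {x, y} \<and> {x, y} \<in> C \<and> {x, y} \<in> C'"
proof -
  have fin: "finite (dverts C \<inter> dverts C')"
    using dverts_sub[OF G(1) wds_cycle[OF G(2) C(1)]] G(1) unfolding ugraph_def
    by (meson finite_Int finite_subset)
  have "{x, y} \<subseteq> dverts C \<inter> dverts C'" using xy by auto
  then have "card {x, y} \<le> card (dverts C \<inter> dverts C')" using fin card_mono by blast
  then have c2: "card (dverts C \<inter> dverts C') \<ge> 2" using xy(1) by simp
  obtain p where p: "is_segment G p" "dverts C \<inter> dverts C' = set p" "C \<inter> C' = path_edges p"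
    using G(2) C c2 unfolding weak_disk_system_def by fastforce
  have pp: "is_path G p" and pi: "\<forall>v\<in>interior p. deg G v = 2"
    using p(1) unfolding is_segment_def deg2_path_def by auto
  have "interior p \<subseteq> set p" unfolding interior_def
    by (metis in_set_butlastD list.sel(2) list.set_sel(2) subsetI)
  then have "interior p \<subseteq> verts G" using pp unfolding is_path_def by blast
  then have "interior p = {}" using pi G(3) by fastforce
  then have "butlast (tl p) = []" unfolding interior_def by simp
  then have "length (butlast (tl p)) = 0" by simp
  then have "length p \<le> 2" by simp
  moreover have "length p \<ge> 2" using pp unfolding is_path_def by simp
  ultimately obtain a b where ab: "p = [a, b]" using len2_list by fastforce
  have "{x, y} \<subseteq> {a, b}" using xy p(2) ab by auto
  then have "{x, y} = {a, b}" using xy(1) by auto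
  moreover have "C \<inter> C' = {{a, b}}" using p(3) ab path_edges2 by simp
  ultimately show ?thesis using p(2) ab by auto
qed



lemma edge_two_disks:
  assumes "weak_disk_system G D" "e \<in> edges G"
  obtains C1 C2 where "C1 \<noteq> C2" "{C\<in>D. e \<in> C} = {C1, C2}"
proof -
  have "card {C\<in>D. e \<in> C} = 2" using assms unfolding weak_disk_system_def cycle_double_cover_def by blast
  then obtain x y where "{C\<in>D. e \<in> C} = {x, y}" "x \<noteq> y" unfolding card_2_iff by blast
  then show ?thesis using that by blast
qed

lemma no_three_disks:
  assumes "weak_disk_system G D" "e \<in> edges G"
    and "C1 \<in> D" "C2 \<in> D" "C3 \<in> D" "e \<in> C1" "e \<in> C2" "e \<in> C3"
    and "C1 \<noteq> C2" "C1 \<noteq> C3" "C2 \<noteq> C3"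
  shows False
proof -
  have c: "card {C\<in>D. e \<in> C} = 2" using assms(1,2) unfolding weak_disk_system_def cycle_double_cover_def by auto
  have f: "finite {C\<in>D. e \<in> C}"
  proof (rule ccontr)
    assume "\<not> finite {C\<in>D. e \<in> C}"
    then have "card {C\<in>D. e \<in> C} = 0" by simp
    then show False using c by simp
  qed
  have "card {C1, C2, C3} \<le> card {C\<in>D. e \<in> C}" by (rule card_mono[OF f]) (use assms in auto)
  then have "card {C1, C2, C3} \<le> 2" using c by simp
  then show False using assms(9-11) by simp
qed

lemma connected_closed:
  assumes "connected_graph G" "x0 \<in> X" "X \<subseteq> verts G" "\<forall>x\<in>X. nbrs G x \<subseteq> X"
  shows "verts G \<subseteq> X"
proof
  fix v assume v: "v \<in> verts G"
  have "x0 \<in> verts G" using assms by auto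
  then have r: "(\<lambda>a b. a \<in> verts G \<and> b \<in> verts G \<and> {a, b} \<in> edges G)\<^sup>*\<^sup>* x0 v"
    using assms(1) v unfolding connected_graph_def connected_set_def by auto
  show "v \<in> X" using r
  proof (induction rule: rtranclp_induct)
    case base then show ?case using assms(2) by simp
  next
    case (step y z)
    then have "z \<in> nbrs G y" unfolding nbrs_def by (simp add: insert_commute)
    then show ?case using step assms(4) by auto
  qed
qed

lemma deg3_nbrs:
  assumes "ugraph G" "\<not> deg G v \<ge> 4" "p \<in> nbrs G v" "q \<in> nbrs G v" "r \<in> nbrs G v"
    "p \<noteq> q" "p \<noteq> r" "q \<noteq> r"
  shows "nbrs G v = {p, q, r}"
proof -
  have f: "finite (nbrs G v)" using nbrs_finite[OF assms(1)] by blast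
  have s: "{p, q, r} \<subseteq> nbrs G v" using assms by auto
  have c: "card {p, q, r} = 3" using assms(6-8) by simp
  have "card (nbrs G v) \<le> 3" using assms(2) unfolding deg_def by simp
  then show ?thesis using card_subset_eq[OF f s] c card_mono[OF f s] by simp
qed

lemma k4_deg:
  assumes "ugraph G" "connected_graph G" "card (verts G) \<ge> 5"
    and "a \<in> verts G" "b \<in> verts G" "c \<in> verts G" "d \<in> verts G"
    and "a \<noteq> b" "a \<noteq> c" "a \<noteq> d" "b \<noteq> c" "b \<noteq> d" "c \<noteq> d"
    and "{a, b} \<in> edges G" "{a, c} \<in> edges G" "{a, d} \<in> edges G"
    and "{b, c} \<in> edges G" "{b, d} \<in> edges G" "{c, d} \<in> edges G"
  shows "deg G a \<ge> 4 \<or> deg G b \<ge> 4 \<or> deg G c \<ge> 4 \<or> deg G d \<ge> 4"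
proof (rule ccontr)
  assume n: "\<not> ?thesis"
  have e: "\<And>u v. {u, v} \<in> edges G \<Longrightarrow> u \<in> nbrs G v \<and> v \<in> nbrs G u"
    unfolding nbrs_def by (simp add: insert_commute)
  have n4: "\<not> deg G a \<ge> 4" "\<not> deg G b \<ge> 4" "\<not> deg G c \<ge> 4" "\<not> deg G d \<ge> 4" using n by auto
  have ab: "a \<in> nbrs G b" "b \<in> nbrs G a" using e assms(14) by auto
  have ac: "a \<in> nbrs G c" "c \<in> nbrs G a" using e assms(15) by auto
  have ad: "a \<in> nbrs G d" "d \<in> nbrs G a" using e assms(16) by auto
  have bc: "b \<in> nbrs G c" "c \<in> nbrs G b" using e assms(17) by auto
  have bd: "b \<in> nbrs G d" "d \<in> nbrs G b" using e assms(18) by auto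
  have cd: "c \<in> nbrs G d" "d \<in> nbrs G c" using e assms(19) by auto
  have na: "nbrs G a = {b, c, d}" by (rule deg3_nbrs[OF assms(1) n4(1)]) (use ab ac ad bc bd cd assms(8-13) in simp_all)
  have nb: "nbrs G b = {a, c, d}" by (rule deg3_nbrs[OF assms(1) n4(2)]) (use ab ac ad bc bd cd assms(8-13) in simp_all)
  have nc: "nbrs G c = {a, b, d}" by (rule deg3_nbrs[OF assms(1) n4(3)]) (use ab ac ad bc bd cd assms(8-13) in simp_all)
  have nd: "nbrs G d = {a, b, c}" by (rule deg3_nbrs[OF assms(1) n4(4)]) (use ab ac ad bc bd cd assms(8-13) in simp_all)
  have "verts G \<subseteq> {a, b, c, d}"
  proof (rule connected_closed[OF assms(2), of a])
    show "a \<in> {a, b, c, d}" by simp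
    show "{a, b, c, d} \<subseteq> verts G" using assms(4-7) by simp
    show "\<forall>x\<in>{a, b, c, d}. nbrs G x \<subseteq> {a, b, c, d}" using na nb nc nd by auto
  qed
  then have "card (verts G) \<le> card {a, b, c, d}" by (rule card_mono[rotated]) simp
  also have "\<dots> = 4" using assms(8-13) by simp
  finally show False using assms(3) by simp
qed

definition crossing :: "'a set set \<Rightarrow> 'a \<Rightarrow> 'a set \<Rightarrow> 'a set \<Rightarrow> bool" where
  "crossing C v N1 N2 \<longleftrightarrow> v \<in> dverts C \<and> (\<exists>a\<in>N1. \<exists>b\<in>N2. {v, a} \<in> C \<and> {v, b} \<in> C)"

lemma nonconf:
  assumes "C \<in> D" "C' \<in> D" "C \<noteq> C'" "crossing C v N1 N2" "crossing C' v N1 N2"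
    "w \<noteq> v" "w \<in> dverts C" "w \<in> dverts C'"
  shows "\<not> conforming_split G D v N1 N2"
proof
  assume "conforming_split G D v N1 N2"
  then obtain D1 D2 where d: "D1 \<noteq> D2"
    "{C\<in>D. v \<in> dverts C \<and> (\<exists>a\<in>N1. \<exists>b\<in>N2. {v, a} \<in> C \<and> {v, b} \<in> C)} = {D1, D2}"
    "dverts D1 \<inter> dverts D2 = {v}" unfolding conforming_split_def by (elim exE conjE) iprover
  have "C \<in> {C\<in>D. v \<in> dverts C \<and> (\<exists>a\<in>N1. \<exists>b\<in>N2. {v, a} \<in> C \<and> {v, b} \<in> C)}"
    using assms(1,4) unfolding crossing_def by simp
  then have c1: "C \<in> {D1, D2}" unfolding d(2) .
  have "C' \<in> {C\<in>D. v \<in> dverts C \<and> (\<exists>a\<in>N1. \<exists>b\<in>N2. {v, a} \<in> C \<and> {v, b} \<in> C)}"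
    using assms(2,5) unfolding crossing_def by simp
  then have c2: "C' \<in> {D1, D2}" unfolding d(2) .
  have "dverts C \<inter> dverts C' = {v}"
    using c1 c2 assms(3) d(3) by (auto simp: Int_commute)
  then show False using assms(6-8) by auto
qed




definition hold :: "'a set set \<Rightarrow> 'a set \<Rightarrow> bool" where
  "hold C l \<longleftrightarrow> l \<in> C \<or> (\<exists>v. l = {v} \<and> v \<in> dverts C)"

definition isloc :: "'a ugr \<Rightarrow> 'a set \<Rightarrow> bool" where
  "isloc G l \<longleftrightarrow> (\<exists>v\<in>verts G. l = {v}) \<or> l \<in> edges G"

definition cA :: "'a set \<Rightarrow> bool \<Rightarrow> 'a \<Rightarrow> 'a set" where
  "cA l k z = (if k then l else {z})"

definition cR :: "'a set \<Rightarrow> bool \<Rightarrow> 'a set set" where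
  "cR l k = (if k then {l} else {})"

definition chok :: "'a ugr \<Rightarrow> 'a set \<Rightarrow> bool \<Rightarrow> 'a \<Rightarrow> bool" where
  "chok G l k z \<longleftrightarrow> (if k then l \<in> edges G else z \<in> l)"

definition target :: "'a ugr \<Rightarrow> 'a set set set \<Rightarrow> 'a set \<Rightarrow> 'a set set \<Rightarrow> bool" where
  "target G D A R \<longleftrightarrow>
    (R = {} \<and> (\<exists>x1 x2 x3. x1 \<in> A \<and> x2 \<in> A \<and> x3 \<in> A \<and> x1 \<noteq> x2 \<and> x1 \<noteq> x3 \<and> x2 \<noteq> x3 \<and>
        \<not> (\<exists>C\<in>D. {x1, x2, x3} \<subseteq> dverts C))) \<or>
    (\<exists>v p q. v \<in> A \<and> p \<in> A \<and> q \<in> A \<and> p \<noteq> q \<and> p \<in> nbrs G v \<and> q \<in> nbrs G v \<and>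
        R \<subseteq> {{v, p}, {v, q}} \<and> deg G v \<ge> 4 \<and>
        \<not> conforming_split G D v (nbrs G v - {p, q}) {p, q})"

definition Good :: "'a ugr \<Rightarrow> 'a set set set \<Rightarrow> 'a set \<Rightarrow> 'a set \<Rightarrow> 'a set \<Rightarrow> bool" where
  "Good G D l0 l1 l2 \<longleftrightarrow> (\<exists>k0 z0 k1 z1 k2 z2. chok G l0 k0 z0 \<and> chok G l1 k1 z1 \<and> chok G l2 k2 z2 \<and>
     target G D (cA l0 k0 z0 \<union> cA l1 k1 z1 \<union> cA l2 k2 z2) (cR l0 k0 \<union> cR l1 k1 \<union> cR l2 k2))"

definition P3 :: "'a set set set \<Rightarrow> 'a set \<Rightarrow> 'a set \<Rightarrow> 'a set \<Rightarrow> bool" where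
  "P3 D l0 l1 l2 \<longleftrightarrow> (\<exists>C\<in>D. hold C l0 \<and> hold C l1) \<and> (\<exists>C\<in>D. hold C l0 \<and> hold C l2) \<and>
     (\<exists>C\<in>D. hold C l1 \<and> hold C l2) \<and> \<not> (\<exists>C\<in>D. hold C l0 \<and> hold C l1 \<and> hold C l2)"

lemma Good_swap01: "Good G D l0 l1 l2 \<Longrightarrow> Good G D l1 l0 l2"
proof -
  assume "Good G D l0 l1 l2"
  then obtain k0 z0 k1 z1 k2 z2 where h: "chok G l0 k0 z0" "chok G l1 k1 z1" "chok G l2 k2 z2"
     "target G D (cA l0 k0 z0 \<union> cA l1 k1 z1 \<union> cA l2 k2 z2) (cR l0 k0 \<union> cR l1 k1 \<union> cR l2 k2)"
    unfolding Good_def by blast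
  have "cA l0 k0 z0 \<union> cA l1 k1 z1 \<union> cA l2 k2 z2 = cA l1 k1 z1 \<union> cA l0 k0 z0 \<union> cA l2 k2 z2"
       "cR l0 k0 \<union> cR l1 k1 \<union> cR l2 k2 = cR l1 k1 \<union> cR l0 k0 \<union> cR l2 k2" by (simp_all add: Un_ac)
  then show ?thesis unfolding Good_def
    by (intro exI[where x=k1] exI[where x=z1] exI[where x=k0] exI[where x=z0] exI[where x=k2] exI[where x=z2] conjI)
       (use h in simp_all)
qed

lemma Good_swap12: "Good G D l0 l1 l2 \<Longrightarrow> Good G D l0 l2 l1"
proof -
  assume "Good G D l0 l1 l2"
  then obtain k0 z0 k1 z1 k2 z2 where h: "chok G l0 k0 z0" "chok G l1 k1 z1" "chok G l2 k2 z2"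
     "target G D (cA l0 k0 z0 \<union> cA l1 k1 z1 \<union> cA l2 k2 z2) (cR l0 k0 \<union> cR l1 k1 \<union> cR l2 k2)"
    unfolding Good_def by blast
  have "cA l0 k0 z0 \<union> cA l1 k1 z1 \<union> cA l2 k2 z2 = cA l0 k0 z0 \<union> cA l2 k2 z2 \<union> cA l1 k1 z1"
       "cR l0 k0 \<union> cR l1 k1 \<union> cR l2 k2 = cR l0 k0 \<union> cR l2 k2 \<union> cR l1 k1" by (simp_all add: Un_ac)
  then show ?thesis unfolding Good_def
    by (intro exI[where x=k0] exI[where x=z0] exI[where x=k2] exI[where x=z2] exI[where x=k1] exI[where x=z1] conjI)
       (use h in simp_all)
qed

lemma P3_swap01: "P3 D l0 l1 l2 \<Longrightarrow> P3 D l1 l0 l2"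
  unfolding P3_def by blast

lemma P3_swap12: "P3 D l0 l1 l2 \<Longrightarrow> P3 D l0 l2 l1"
  unfolding P3_def by blast

lemma GoodI8:
  assumes "z0 \<in> l0" "z1 \<in> l1" "z2 \<in> l2" "z0 \<noteq> z1" "z0 \<noteq> z2" "z1 \<noteq> z2"
    "\<not> (\<exists>C\<in>D. {z0, z1, z2} \<subseteq> dverts C)"
  shows "Good G D l0 l1 l2"
  unfolding Good_def
proof (intro exI conjI)
  show "chok G l0 False z0" "chok G l1 False z1" "chok G l2 False z2"
    using assms unfolding chok_def by auto
  show "target G D (cA l0 False z0 \<union> cA l1 False z1 \<union> cA l2 False z2) (cR l0 False \<union> cR l1 False \<union> cR l2 False)"
    unfolding target_def cA_def cR_def
    by (rule disjI1, intro conjI exI[where x=z0] exI[where x=z1] exI[where x=z2]) (use assms in simp_all)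
qed

lemma GoodIS:
  assumes "chok G l0 ka za" "chok G l1 kb zb" "chok G l2 kc zc"
    "v \<in> cA l0 ka za \<union> cA l1 kb zb \<union> cA l2 kc zc"
    "p \<in> cA l0 ka za \<union> cA l1 kb zb \<union> cA l2 kc zc"
    "q \<in> cA l0 ka za \<union> cA l1 kb zb \<union> cA l2 kc zc"
    "p \<noteq> q" "{p, v} \<in> edges G" "{q, v} \<in> edges G"
    "cR l0 ka \<union> cR l1 kb \<union> cR l2 kc \<subseteq> {{v, p}, {v, q}}" "deg G v \<ge> 4"
    "\<not> conforming_split G D v (nbrs G v - {p, q}) {p, q}"
  shows "Good G D l0 l1 l2"
  unfolding Good_def
proof (intro exI conjI)
  show "chok G l0 ka za" "chok G l1 kb zb" "chok G l2 kc zc" using assms by auto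
  show "target G D (cA l0 ka za \<union> cA l1 kb zb \<union> cA l2 kc zc) (cR l0 ka \<union> cR l1 kb \<union> cR l2 kc)"
    unfolding target_def
    by (rule disjI2, intro conjI exI[where x=v] exI[where x=p] exI[where x=q]) (use assms(4-12) in \<open>simp_all add: nbrs_iff\<close>)
qed

locale gs =
  fixes G :: "'a ugr" and D :: "'a set set set"
  assumes ug: "ugraph G" and cg: "connected_graph G" and c5: "card (verts G) \<ge> 5"
    and nd2: "\<forall>v\<in>verts G. deg G v \<noteq> 2" and wds: "weak_disk_system G D"
begin

lemma dE: "C \<in> D \<Longrightarrow> C \<subseteq> edges G"
  using wds_cycle[OF wds] .

lemma dEe: "C \<in> D \<Longrightarrow> e \<in> C \<Longrightarrow> e \<in> edges G"
  using dE by blast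

lemma W:
  assumes "C \<in> D" "C' \<in> D" "C \<noteq> C'" "x \<noteq> y" "x \<in> dverts C" "y \<in> dverts C"
    "x \<in> dverts C'" "y \<in> dverts C'"
  shows "dverts C \<inter> dverts C' = {x, y} \<and> {x, y} \<in> C \<and> {x, y} \<in> C'"
  using disk_inter[OF ug wds nd2 assms] .

lemma edge_not_single: "e \<in> edges G \<Longrightarrow> e \<noteq> {v}"
proof
  assume "e \<in> edges G" "e = {v}"
  then obtain a b where "{v} = {a, b}" "a \<noteq> b" using ugraph_edge[OF ug] by metis
  then have "a \<in> {v}" "b \<in> {v}" by auto
  then show False using \<open>a \<noteq> b\<close> by simp
qed

lemma hold_v: "C \<in> D \<Longrightarrow> hold C {v} \<longleftrightarrow> v \<in> dverts C"
  unfolding hold_def using dEe edge_not_single by blast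

lemma hold_e: "a \<noteq> b \<Longrightarrow> hold C {a, b} \<longleftrightarrow> {a, b} \<in> C"
proof -
  assume "a \<noteq> b"
  then have "\<not> (\<exists>v. {a, b} = {v})"
  proof (intro notI, elim exE)
    fix v assume "{a, b} = {v}"
    then have "a \<in> {v}" "b \<in> {v}" by auto
    then show False using \<open>a \<noteq> b\<close> by simp
  qed
  then show ?thesis unfolding hold_def by blast
qed

lemma splitNC:
  assumes "C \<in> D" "C' \<in> D" "C \<noteq> C'" "{v, a} \<in> C" "{v, b} \<in> C" "{v, a'} \<in> C'" "{v, b'} \<in> C'"
    "a \<notin> {p, q}" "a' \<notin> {p, q}" "b \<in> {p, q}" "b' \<in> {p, q}" "w \<noteq> v" "w \<in> dverts C" "w \<in> dverts C'"
  shows "\<not> conforming_split G D v (nbrs G v - {p, q}) {p, q}"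
proof (rule nonconf[OF assms(1-3) _ _ assms(12-14)])
  have n: "a \<in> nbrs G v" "a' \<in> nbrs G v"
    using dEe[OF assms(1,4)] dEe[OF assms(2,6)] unfolding nbrs_iff by (auto simp: insert_commute)
  show "crossing C v (nbrs G v - {p, q}) {p, q}" unfolding crossing_def
    using n assms(4,5,8,10) in_dverts[OF assms(4)] by blast
  show "crossing C' v (nbrs G v - {p, q}) {p, q}" unfolding crossing_def
    using n assms(6,7,9,11) in_dverts[OF assms(6)] by blast
qed

lemma trick:
  assumes "x \<noteq> y" "z \<noteq> z'" "x \<noteq> z" "x \<noteq> z'" "Y \<in> D" "Z \<in> D"
    "x \<in> dverts Y" "y \<in> dverts Y" "x \<in> dverts Z" "z \<in> dverts Z" "z' \<in> dverts Z"
    "y \<notin> dverts Z" "z \<notin> dverts Y" "z' \<notin> dverts Y"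
    "D1 \<in> D" "{x, y, z} \<subseteq> dverts D1" "D2 \<in> D" "{x, y, z'} \<subseteq> dverts D2"
  shows False
proof -
  have n1: "D1 \<noteq> Y" using assms(13,16) by auto
  have n2: "D2 \<noteq> Y" using assms(14,18) by auto
  have n3: "D1 \<noteq> D2"
  proof
    assume eq: "D1 = D2"
    have "D1 \<noteq> Z" using assms(12,16) by auto
    then have "dverts D1 \<inter> dverts Z = {x, z}" using W[OF assms(15,6) _ assms(3)] assms(9,10,16) by auto
    moreover have "z' \<in> dverts D1" using eq assms(18) by auto
    ultimately show False using assms(2,4,11) by auto
  qed
  have e1: "{x, y} \<in> D1" "{x, y} \<in> Y" using W[OF assms(15,5) n1 assms(1)] assms(7,8,16) by auto
  have e2: "{x, y} \<in> D2" using W[OF assms(17,5) n2 assms(1)] assms(7,8,18) by auto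
  show False using no_three_disks[OF wds dEe[OF assms(5) e1(2)] assms(15,17,5) e1(1) e2 e1(2) n3 n1 n2] .
qed

end



context gs
begin

lemma hold_E: "e \<in> edges G \<Longrightarrow> hold C e \<longleftrightarrow> e \<in> C"
  unfolding hold_def using edge_not_single by blast

lemma other_end:
  assumes "e \<in> edges G" "a \<in> e"
  obtains b where "e = {a, b}" "a \<noteq> b"
proof -
  obtain x y where xy: "e = {x, y}" "x \<noteq> y" using ugraph_edge[OF ug assms(1)] by metis
  show ?thesis
  proof (cases "a = x")
    case True then show ?thesis using that xy by blast
  next
    case False then have "a = y" using xy assms(2) by blast
    then show ?thesis using that[of x] xy by (simp add: insert_commute)
  qed
qed

lemma case_k0:
  assumes "u0 \<in> verts G" "u1 \<in> verts G" "u2 \<in> verts G" "P3 D {u0} {u1} {u2}"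
  shows "Good G D {u0} {u1} {u2}"
proof -
  have P: "\<exists>C\<in>D. u0 \<in> dverts C \<and> u2 \<in> dverts C" "\<exists>C\<in>D. u0 \<in> dverts C \<and> u1 \<in> dverts C"
    "\<exists>C\<in>D. u1 \<in> dverts C \<and> u2 \<in> dverts C"
    "\<not> (\<exists>C\<in>D. u0 \<in> dverts C \<and> u1 \<in> dverts C \<and> u2 \<in> dverts C)"
    using assms(4) unfolding P3_def by (auto simp: hold_v)
  have d: "u0 \<noteq> u1" "u0 \<noteq> u2" "u1 \<noteq> u2" using P by blast+
  show ?thesis by (rule GoodI8[of u0 _ u1 _ u2]) (use d P(4) in auto)
qed

lemma case_k1:
  assumes ab: "{a, b} \<in> edges G" "a \<noteq> b" and uw: "u \<in> verts G" "w \<in> verts G"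
    and P: "P3 D {a, b} {u} {w}"
  shows "Good G D {a, b} {u} {w}"
proof -
  have P': "\<exists>C\<in>D. {a, b} \<in> C \<and> u \<in> dverts C" "\<exists>C\<in>D. {a, b} \<in> C \<and> w \<in> dverts C"
    "\<not> (\<exists>C\<in>D. {a, b} \<in> C \<and> u \<in> dverts C \<and> w \<in> dverts C)"
    using P unfolding P3_def by (auto simp: hold_v hold_e[OF ab(2)])
  obtain Cu where Cu: "Cu \<in> D" "{a, b} \<in> Cu" "u \<in> dverts Cu" using P'(1) by blast
  obtain Cw where Cw: "Cw \<in> D" "{a, b} \<in> Cw" "w \<in> dverts Cw" using P'(2) by blast
  have abCu: "a \<in> dverts Cu" "b \<in> dverts Cu" using in_dverts[OF Cu(2)] by auto
  have abCw: "a \<in> dverts Cw" "b \<in> dverts Cw" using in_dverts[OF Cw(2)] by auto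
  have wCu: "w \<notin> dverts Cu" using P'(3) Cu by blast
  have uCw: "u \<notin> dverts Cw" using P'(3) Cw by blast
  have d: "u \<noteq> a" "u \<noteq> b" "w \<noteq> a" "w \<noteq> b" "u \<noteq> w"
    using abCu abCw wCu uCw Cu(3) by auto
  have abV: "a \<in> verts G" "b \<in> verts G" using edge_sub[OF ug ab(1)] by auto
  show ?thesis
  proof (cases "\<exists>C\<in>D. {a, u, w} \<subseteq> dverts C")
    case False then show ?thesis by (intro GoodI8[of a _ u _ w]) (use d in auto)
  next
    case True
    then obtain D3 where D3: "D3 \<in> D" "a \<in> dverts D3" "u \<in> dverts D3" "w \<in> dverts D3" by auto
    show ?thesis
    proof (cases "\<exists>C\<in>D. {b, u, w} \<subseteq> dverts C")
      case False then show ?thesis by (intro GoodI8[of b _ u _ w]) (use d in auto)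
    next
      case True
      then obtain D4 where D4: "D4 \<in> D" "b \<in> dverts D4" "u \<in> dverts D4" "w \<in> dverts D4" by auto
      have n: "Cu \<noteq> D3" "Cw \<noteq> D3" "Cu \<noteq> D4" "Cw \<noteq> D4" using D3 D4 wCu uCw by auto
      have W1: "dverts Cu \<inter> dverts D3 = {a, u}" "{a, u} \<in> Cu" "{a, u} \<in> D3"
        using W[OF Cu(1) D3(1) n(1)] d abCu Cu(3) D3 by auto
      have W2: "{a, w} \<in> Cw" "{a, w} \<in> D3"
        using W[OF Cw(1) D3(1) n(2)] d abCw Cw(3) D3 by auto
      have W3: "{b, u} \<in> Cu" "{b, u} \<in> D4"
        using W[OF Cu(1) D4(1) n(3)] d abCu Cu(3) D4 by auto
      have W4: "{b, w} \<in> Cw" "{b, w} \<in> D4"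
        using W[OF Cw(1) D4(1) n(4)] d abCw Cw(3) D4 by auto
      have n34: "D3 \<noteq> D4"
      proof
        assume "D3 = D4"
        then have "b \<in> dverts Cu \<inter> dverts D3" using abCu D4 by auto
        then show False using W1(1) ab(2) d by auto
      qed
      have W5: "{u, w} \<in> D3" "{u, w} \<in> D4"
        using W[OF D3(1) D4(1) n34] d D3 D4 by auto
      have E: "{a, u} \<in> edges G" "{a, w} \<in> edges G" "{b, u} \<in> edges G" "{b, w} \<in> edges G"
        "{u, w} \<in> edges G"
        using dEe[OF Cu(1) W1(2)] dEe[OF Cw(1) W2(1)] dEe[OF Cu(1) W3(1)] dEe[OF Cw(1) W4(1)]
          dEe[OF D3(1) W5(1)] by auto
      have "deg G a \<ge> 4 \<or> deg G b \<ge> 4 \<or> deg G u \<ge> 4 \<or> deg G w \<ge> 4"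
        by (rule k4_deg[OF ug cg c5]) (use abV uw d ab E in auto)
      moreover
      { assume dg: "deg G a \<ge> 4"
        have nc: "\<not> conforming_split G D a (nbrs G a - {b, w}) {b, w}"
          by (rule splitNC[where C=Cu and C'=D3 and v=a and a=u and b=b and a'=u and b'=w and w=u])
             (use Cu D3 W1 W2 d ab n(1) in auto)
        have ?thesis
          by (rule GoodIS[where ka=True and za=a and kb=False and zb=u and kc=False and zc=w
                and v=a and p=b and q=w])
             (use nc dg ab E d in \<open>auto simp: chok_def cA_def cR_def insert_commute\<close>) }
      moreover
      { assume dg: "deg G b \<ge> 4"
        have nc: "\<not> conforming_split G D b (nbrs G b - {a, u}) {a, u}"
          by (rule splitNC[where C=Cw and C'=D4 and v=b and a=w and b=a and a'=w and b'=u and w=w])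
             (use Cw D4 W4 W3 W5 d ab n(4) in \<open>auto simp: insert_commute\<close>)
        have ?thesis
          by (rule GoodIS[where ka=True and za=a and kb=False and zb=u and kc=False and zc=w
                and v=b and p=a and q=u])
             (use nc dg ab E d in \<open>auto simp: chok_def cA_def cR_def insert_commute\<close>) }
      moreover
      { assume dg: "deg G u \<ge> 4"
        have nc: "\<not> conforming_split G D u (nbrs G u - {a, w}) {a, w}"
          by (rule splitNC[where C=Cu and C'=D4 and v=u and a=b and b=a and a'=b and b'=w and w=b])
             (use Cu D4 W1 W3 W5 d ab n(3) abCu in \<open>auto simp: insert_commute\<close>)
        have ?thesis
          by (rule GoodIS[where ka=False and za=a and kb=False and zb=u and kc=False and zc=w
                and v=u and p=a and q=w])
             (use nc dg ab E d in \<open>auto simp: chok_def cA_def cR_def insert_commute\<close>) }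
      moreover
      { assume dg: "deg G w \<ge> 4"
        have nc: "\<not> conforming_split G D w (nbrs G w - {b, u}) {b, u}"
          by (rule splitNC[where C=Cw and C'=D3 and v=w and a=a and b=b and a'=a and b'=u and w=a])
             (use Cw D3 W2 W4 W5 d ab n(2) abCw in \<open>auto simp: insert_commute\<close>)
        have ?thesis
          by (rule GoodIS[where ka=False and za=b and kb=False and zb=u and kc=False and zc=w
                and v=w and p=b and q=u])
             (use nc dg ab E d in \<open>auto simp: chok_def cA_def cR_def insert_commute\<close>) }
      ultimately show ?thesis by blast
    qed
  qed
qed

end



context gs
begin

lemma case_k2s:
  assumes ab: "{a, b} \<in> edges G" "a \<noteq> b" and ad: "{a, d} \<in> edges G" "a \<noteq> d" "b \<noteq> d"
    and u: "u \<in> verts G" and P: "P3 D {a, b} {a, d} {u}"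
  shows "Good G D {a, b} {a, d} {u}"
proof -
  have P': "\<exists>C\<in>D. {a, b} \<in> C \<and> {a, d} \<in> C" "\<exists>C\<in>D. {a, b} \<in> C \<and> u \<in> dverts C"
    "\<exists>C\<in>D. {a, d} \<in> C \<and> u \<in> dverts C"
    "\<not> (\<exists>C\<in>D. {a, b} \<in> C \<and> {a, d} \<in> C \<and> u \<in> dverts C)"
    using P unfolding P3_def by (auto simp: hold_v hold_e[OF ab(2)] hold_e[OF ad(2)])
  obtain X where X: "X \<in> D" "{a, b} \<in> X" "{a, d} \<in> X" using P'(1) by blast
  obtain Y1 where Y1: "Y1 \<in> D" "{a, b} \<in> Y1" "u \<in> dverts Y1" using P'(2) by blast
  obtain Y2 where Y2: "Y2 \<in> D" "{a, d} \<in> Y2" "u \<in> dverts Y2" using P'(3) by blast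
  have uX: "u \<notin> dverts X" using P'(4) X by blast
  have e2Y1: "{a, d} \<notin> Y1" using P'(4) Y1 by blast
  have e1Y2: "{a, b} \<notin> Y2" using P'(4) Y2 by blast
  have n: "X \<noteq> Y1" "X \<noteq> Y2" "Y1 \<noteq> Y2" using uX Y1 Y2 e2Y1 by auto
  have vX: "a \<in> dverts X" "b \<in> dverts X" "d \<in> dverts X" using in_dverts[OF X(2)] in_dverts[OF X(3)] by auto
  have vY1: "a \<in> dverts Y1" "b \<in> dverts Y1" using in_dverts[OF Y1(2)] by auto
  have vY2: "a \<in> dverts Y2" "d \<in> dverts Y2" using in_dverts[OF Y2(2)] by auto
  have du: "u \<noteq> a" "u \<noteq> b" "u \<noteq> d" using uX vX by auto
  have I1: "dverts X \<inter> dverts Y1 = {a, b}" using W[OF X(1) Y1(1) n(1) ab(2)] vX vY1 by auto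
  have I2: "dverts X \<inter> dverts Y2 = {a, d}" using W[OF X(1) Y2(1) n(2) ad(2)] vX vY2 by auto
  have abV: "a \<in> verts G" "b \<in> verts G" "d \<in> verts G" using edge_sub[OF ug ab(1)] edge_sub[OF ug ad(1)] by auto
  show ?thesis
  proof (cases "\<exists>C\<in>D. {b, d, u} \<subseteq> dverts C")
    case False then show ?thesis by (intro GoodI8[of b _ d _ u]) (use du ad in auto)
  next
    case True
    then obtain Dd where Dd: "Dd \<in> D" "b \<in> dverts Dd" "d \<in> dverts Dd" "u \<in> dverts Dd" by auto
    have dY1: "d \<notin> dverts Y1" using I1 vX ad by auto
    have bY2: "b \<notin> dverts Y2" using I2 vX ab ad by auto
    have m: "Dd \<noteq> X" "Dd \<noteq> Y1" "Dd \<noteq> Y2" using uX dY1 bY2 Dd by auto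
    have W1: "{b, d} \<in> Dd" "{b, d} \<in> X" using W[OF Dd(1) X(1) m(1) ad(3)] Dd vX by auto
    have W2: "{b, u} \<in> Dd" "{b, u} \<in> Y1" using W[OF Dd(1) Y1(1) m(2)] Dd vY1 Y1 du by auto
    have W3: "{d, u} \<in> Dd" "{d, u} \<in> Y2" using W[OF Dd(1) Y2(1) m(3)] Dd vY2 Y2 du by auto
    have W4: "{a, u} \<in> Y1" "{a, u} \<in> Y2" using W[OF Y1(1) Y2(1) n(3)] vY1 vY2 Y1 Y2 du by auto
    have E: "{b, d} \<in> edges G" "{b, u} \<in> edges G" "{d, u} \<in> edges G" "{a, u} \<in> edges G"
      using dEe[OF X(1) W1(2)] dEe[OF Y1(1) W2(2)] dEe[OF Y2(1) W3(2)] dEe[OF Y1(1) W4(1)] by auto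
    have "deg G a \<ge> 4 \<or> deg G b \<ge> 4 \<or> deg G d \<ge> 4 \<or> deg G u \<ge> 4"
      by (rule k4_deg[OF ug cg c5]) (use abV u du ab ad E in auto)
    moreover
    { assume dg: "deg G a \<ge> 4"
      have nc: "\<not> conforming_split G D a (nbrs G a - {b, u}) {b, u}"
        by (rule splitNC[where C=X and C'=Y2 and v=a and a=d and b=b and a'=d and b'=u and w=d])
           (use X Y2 W4 n(2) ad du vX vY2 in auto)
      have ?thesis
        by (rule GoodIS[where ka=True and za=a and kb=False and zb=d and kc=False and zc=u
              and v=a and p=b and q=u])
           (use nc dg ab ad E du in \<open>auto simp: chok_def cA_def cR_def insert_commute\<close>) }
    moreover
    { assume dg: "deg G b \<ge> 4"
      have nc: "\<not> conforming_split G D b (nbrs G b - {a, u}) {a, u}"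
        by (rule splitNC[where C=X and C'=Dd and v=b and a=d and b=a and a'=d and b'=u and w=d])
           (use X Dd W1 W2 m(1) ad du vX in \<open>auto simp: insert_commute\<close>)
      have ?thesis
        by (rule GoodIS[where ka=True and za=a and kb=False and zb=d and kc=False and zc=u
              and v=b and p=a and q=u])
           (use nc dg ab ad E du in \<open>auto simp: chok_def cA_def cR_def insert_commute\<close>) }
    moreover
    { assume dg: "deg G d \<ge> 4"
      have nc: "\<not> conforming_split G D d (nbrs G d - {a, u}) {a, u}"
        by (rule splitNC[where C=X and C'=Dd and v=d and a=b and b=a and a'=b and b'=u and w=b])
           (use X Dd W1 W3 m(1) ab ad du vX in \<open>auto simp: insert_commute\<close>)
      have ?thesis
        by (rule GoodIS[where ka=False and za=b and kb=True and zb=d and kc=False and zc=u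
              and v=d and p=a and q=u])
           (use nc dg ab ad E du in \<open>auto simp: chok_def cA_def cR_def insert_commute\<close>) }
    moreover
    { assume dg: "deg G u \<ge> 4"
      have nc: "\<not> conforming_split G D u (nbrs G u - {b, d}) {b, d}"
        by (rule splitNC[where C=Y1 and C'=Y2 and v=u and a=a and b=b and a'=a and b'=d and w=a])
           (use Y1 Y2 W2 W3 W4 n(3) ab ad du vY1 vY2 in \<open>auto simp: insert_commute\<close>)
      have ?thesis
        by (rule GoodIS[where ka=False and za=b and kb=False and zb=d and kc=False and zc=u
              and v=u and p=b and q=d])
           (use nc dg ab ad E du in \<open>auto simp: chok_def cA_def cR_def insert_commute\<close>) }
    ultimately show ?thesis by blast
  qed
qed

lemma case_k2:
  assumes e1: "e1 \<in> edges G" and e2: "e2 \<in> edges G" and u: "u \<in> verts G" and P: "P3 D e1 e2 {u}"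
  shows "Good G D e1 e2 {u}"
proof -
  obtain a b where ab: "e1 = {a, b}" "a \<noteq> b" using ugraph_edge[OF ug e1] by metis
  obtain c d where cd: "e2 = {c, d}" "c \<noteq> d" using ugraph_edge[OF ug e2] by metis
  have P': "\<exists>C\<in>D. e1 \<in> C \<and> e2 \<in> C" "\<exists>C\<in>D. e1 \<in> C \<and> u \<in> dverts C"
    "\<exists>C\<in>D. e2 \<in> C \<and> u \<in> dverts C"
    "\<not> (\<exists>C\<in>D. e1 \<in> C \<and> e2 \<in> C \<and> u \<in> dverts C)"
    using P unfolding P3_def by (auto simp: hold_v hold_E[OF e1] hold_E[OF e2])
  obtain X where X: "X \<in> D" "e1 \<in> X" "e2 \<in> X" using P'(1) by blast
  obtain Y1 where Y1: "Y1 \<in> D" "e1 \<in> Y1" "u \<in> dverts Y1" using P'(2) by blast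
  obtain Y2 where Y2: "Y2 \<in> D" "e2 \<in> Y2" "u \<in> dverts Y2" using P'(3) by blast
  have uX: "u \<notin> dverts X" using P'(4) X by blast
  have e2Y1: "e2 \<notin> Y1" using P'(4) Y1 by blast
  have e12: "e1 \<noteq> e2" using e2Y1 Y1 by auto
  have n: "X \<noteq> Y1" using uX Y1 by auto
  have vX: "a \<in> dverts X" "b \<in> dverts X" "c \<in> dverts X" "d \<in> dverts X"
    using in_dverts[OF X(2)] in_dverts[OF X(3)] ab cd by auto
  have vY1: "a \<in> dverts Y1" "b \<in> dverts Y1" using in_dverts[OF Y1(2)] ab by auto
  have du: "u \<noteq> a" "u \<noteq> c" "u \<noteq> d" using uX vX by auto
  have I1: "dverts X \<inter> dverts Y1 = {a, b}" using W[OF X(1) Y1(1) n ab(2)] vX vY1 by auto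
  show ?thesis
  proof (cases "{a, b} \<inter> {c, d} = {}")
    case True
    have cY1: "c \<notin> dverts Y1" "d \<notin> dverts Y1" using I1 vX True by auto
    have dd: "a \<noteq> c" "a \<noteq> d" using True by auto
    show ?thesis
    proof (cases "\<exists>C\<in>D. {a, c, u} \<subseteq> dverts C")
      case False then show ?thesis by (intro GoodI8[of a _ c _ u]) (use ab cd du dd in auto)
    next
      case T1: True
      then obtain D1 where D1: "D1 \<in> D" "{a, u, c} \<subseteq> dverts D1" by auto
      show ?thesis
      proof (cases "\<exists>C\<in>D. {a, d, u} \<subseteq> dverts C")
        case False then show ?thesis by (intro GoodI8[of a _ d _ u]) (use ab cd du dd in auto)
      next
        case True
        then obtain D2 where D2: "D2 \<in> D" "{a, u, d} \<subseteq> dverts D2" by auto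
        have False
          by (rule trick[OF du(1)[symmetric] cd(2) dd Y1(1) X(1) vY1(1) Y1(3) vX(1,3,4) uX cY1 D1 D2])
        then show ?thesis ..
      qed
    qed
  next
    case False
    then have "a = c \<or> a = d \<or> b = c \<or> b = d" by auto
    moreover
    { assume "a = c"
      then have ?thesis using case_k2s[of a b d u] ab cd e1 e2 e12 u P by auto }
    moreover
    { assume h: "a = d"
      then have "e2 = {a, c}" using cd by (simp add: insert_commute)
      then have ?thesis using case_k2s[of a b c u] ab cd e1 e2 e12 u P h by auto }
    moreover
    { assume h: "b = c"
      then have "e1 = {b, a}" using ab by (simp add: insert_commute)
      then have ?thesis using case_k2s[of b a d u] ab cd e1 e2 e12 u P h by auto }
    moreover
    { assume h: "b = d"
      then have "e1 = {b, a}" "e2 = {b, c}" using ab cd by (simp_all add: insert_commute)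
      then have ?thesis using case_k2s[of b a c u] ab cd e1 e2 e12 u P h by auto }
    ultimately show ?thesis by blast
  qed
qed

end



context gs
begin

lemma case_k3:
  assumes e1: "e1 \<in> edges G" and e2: "e2 \<in> edges G" and e3: "e3 \<in> edges G" and P: "P3 D e1 e2 e3"
  shows "Good G D e1 e2 e3"
proof -
  have P': "\<exists>C\<in>D. e1 \<in> C \<and> e2 \<in> C" "\<exists>C\<in>D. e1 \<in> C \<and> e3 \<in> C"
    "\<exists>C\<in>D. e2 \<in> C \<and> e3 \<in> C" "\<not> (\<exists>C\<in>D. e1 \<in> C \<and> e2 \<in> C \<and> e3 \<in> C)"
    using P unfolding P3_def by (auto simp: hold_E[OF e1] hold_E[OF e2] hold_E[OF e3])
  obtain X12 where X12: "X12 \<in> D" "e1 \<in> X12" "e2 \<in> X12" using P'(1) by blast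
  obtain X13 where X13: "X13 \<in> D" "e1 \<in> X13" "e3 \<in> X13" using P'(2) by blast
  obtain X23 where X23: "X23 \<in> D" "e2 \<in> X23" "e3 \<in> X23" using P'(3) by blast
  have ne: "e3 \<notin> X12" "e2 \<notin> X13" "e1 \<notin> X23" using P'(4) X12 X13 X23 by blast+
  have n: "X12 \<noteq> X13" "X12 \<noteq> X23" "X13 \<noteq> X23"
    using ne(1) X13(3) ne(1) X23(3) ne(2) X23(2) by metis+
  have de: "e1 \<noteq> e2" "e1 \<noteq> e3" "e2 \<noteq> e3"
    using ne(2) X13(2) ne(1) X12(2) X12(3) by metis+
  have sub: "e1 \<subseteq> dverts X12" "e2 \<subseteq> dverts X12" "e1 \<subseteq> dverts X13" "e3 \<subseteq> dverts X13"
    "e2 \<subseteq> dverts X23" "e3 \<subseteq> dverts X23"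
    using in_dverts[OF X12(2)] in_dverts[OF X12(3)] in_dverts[OF X13(2)] in_dverts[OF X13(3)]
      in_dverts[OF X23(2)] in_dverts[OF X23(3)] by blast+
  have I: "\<And>C C' e. C \<in> D \<Longrightarrow> C' \<in> D \<Longrightarrow> C \<noteq> C' \<Longrightarrow> e \<in> edges G \<Longrightarrow> e \<subseteq> dverts C \<Longrightarrow>
           e \<subseteq> dverts C' \<Longrightarrow> dverts C \<inter> dverts C' = e"
  proof -
    fix C C' e assume h: "C \<in> D" "C' \<in> D" "C \<noteq> C'" "e \<in> edges G" "e \<subseteq> dverts C" "e \<subseteq> dverts C'"
    obtain x y where xy: "e = {x, y}" "x \<noteq> y" using ugraph_edge[OF ug h(4)] by metis
    show "dverts C \<inter> dverts C' = e" using W[OF h(1-3) xy(2)] h(5,6) xy(1) by auto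
  qed
  have I1: "dverts X12 \<inter> dverts X13 = e1" using I[OF X12(1) X13(1) n(1) e1] sub by auto
  have I2: "dverts X12 \<inter> dverts X23 = e2" using I[OF X12(1) X23(1) n(2) e2] sub by auto
  have I3: "dverts X13 \<inter> dverts X23 = e3" using I[OF X13(1) X23(1) n(3) e3] sub by auto
  show ?thesis
  proof (cases "e3 \<inter> (e1 \<union> e2) = {}")
    case True
    obtain a b where ab: "e1 = {a, b}" "a \<noteq> b" using ugraph_edge[OF ug e1] by metis
    obtain f g where fg: "e3 = {f, g}" "f \<noteq> g" using ugraph_edge[OF ug e3] by metis
    obtain c d where cd: "e2 = {c, d}" "c \<noteq> d" using ugraph_edge[OF ug e2] by metis
    obtain y where y: "y \<in> e2" "y \<notin> e1"
    proof (cases "c \<in> e1 \<and> d \<in> e1")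
      case True
      then have "e2 \<subseteq> e1" using cd by auto
      then have "e2 = e1" using ab cd by auto
      then show ?thesis using de by auto
    next
      case False then show ?thesis using that cd by auto
    qed
    have yX13: "y \<notin> dverts X13" using I1 y sub by auto
    have fX12: "f \<notin> dverts X12" "g \<notin> dverts X12" using I1 fg sub True by auto
    have dd: "a \<noteq> y" "a \<noteq> f" "a \<noteq> g" "y \<noteq> f" using y ab fg True by auto
    show ?thesis
    proof (cases "\<exists>C\<in>D. {a, y, f} \<subseteq> dverts C")
      case False then show ?thesis by (intro GoodI8[of a _ y _ f]) (use ab y fg dd in auto)
    next
      case T1: True
      then obtain D1 where D1: "D1 \<in> D" "{a, y, f} \<subseteq> dverts D1" by auto
      show ?thesis
      proof (cases "\<exists>C\<in>D. {a, y, g} \<subseteq> dverts C")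
        case False
        have "y \<noteq> g" using y fg True by auto
        then show ?thesis using False by (intro GoodI8[of a _ y _ g]) (use ab y fg dd in auto)
      next
        case True
        then obtain D2 where D2: "D2 \<in> D" "{a, y, g} \<subseteq> dverts D2" by auto
        have False
          by (rule trick[OF dd(1) fg(2) dd(2,3) X12(1) X13(1) _ _ _ _ _ yX13 fX12 D1 D2])
             (use sub ab y fg in auto)
        then show ?thesis ..
      qed
    qed
  next
    case False
    then obtain a where a3: "a \<in> e3" "a \<in> e1 \<or> a \<in> e2" by auto
    have a1: "a \<in> e1" and a2: "a \<in> e2"
    proof -
      show "a \<in> e1"
      proof (cases "a \<in> e1")
        case False
        then have "a \<in> e2" using a3 by auto
        then have "a \<in> dverts X12 \<inter> dverts X13" using sub a3 by auto
        then show ?thesis using I1 by auto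
      qed
      then show "a \<in> e2" using sub a3 I2 by auto
    qed
    obtain b where ab: "e1 = {a, b}" "a \<noteq> b" using other_end[OF e1 a1] by metis
    obtain c where ac: "e2 = {a, c}" "a \<noteq> c" using other_end[OF e2 a2] by metis
    obtain g where ag: "e3 = {a, g}" "a \<noteq> g" using other_end[OF e3 a3(1)] by metis
    have dd: "b \<noteq> c" "b \<noteq> g" "c \<noteq> g" using de ab ac ag by auto
    have vX12: "a \<in> dverts X12" "b \<in> dverts X12" "c \<in> dverts X12" using sub ab ac by auto
    have vX13: "a \<in> dverts X13" "b \<in> dverts X13" "g \<in> dverts X13" using sub ab ag by auto
    have vX23: "a \<in> dverts X23" "c \<in> dverts X23" "g \<in> dverts X23" using sub ac ag by auto
    have V: "a \<in> verts G" "b \<in> verts G" "c \<in> verts G" "g \<in> verts G"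
      using edge_sub[OF ug e1] edge_sub[OF ug e2] edge_sub[OF ug e3] ab ac ag by auto
    show ?thesis
    proof (cases "\<exists>C\<in>D. {b, c, g} \<subseteq> dverts C")
      case False then show ?thesis by (intro GoodI8[of b _ c _ g]) (use ab ac ag dd in auto)
    next
      case True
      then obtain Dd where Dd: "Dd \<in> D" "b \<in> dverts Dd" "c \<in> dverts Dd" "g \<in> dverts Dd" by auto
      have o: "g \<notin> dverts X12" "c \<notin> dverts X13" "b \<notin> dverts X23"
        using I1 I2 vX13 vX12 ab ac ag dd by auto
      have m: "Dd \<noteq> X12" "Dd \<noteq> X13" "Dd \<noteq> X23" using o Dd by auto
      have W1: "{b, c} \<in> Dd" "{b, c} \<in> X12" using W[OF Dd(1) X12(1) m(1) dd(1)] Dd vX12 by auto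
      have W2: "{b, g} \<in> Dd" "{b, g} \<in> X13" using W[OF Dd(1) X13(1) m(2) dd(2)] Dd vX13 by auto
      have W3: "{c, g} \<in> Dd" "{c, g} \<in> X23" using W[OF Dd(1) X23(1) m(3) dd(3)] Dd vX23 by auto
      have E: "{b, c} \<in> edges G" "{b, g} \<in> edges G" "{c, g} \<in> edges G"
        using dEe[OF Dd(1) W1(1)] dEe[OF Dd(1) W2(1)] dEe[OF Dd(1) W3(1)] by auto
      have eab: "{a, b} \<in> edges G" "{a, c} \<in> edges G" "{a, g} \<in> edges G" using e1 e2 e3 ab ac ag by auto
      have xs: "{a, b} \<in> X12" "{a, c} \<in> X12" "{a, b} \<in> X13" "{a, g} \<in> X13" "{a, c} \<in> X23" "{a, g} \<in> X23"
        using X12 X13 X23 ab ac ag by auto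
      have "deg G a \<ge> 4 \<or> deg G b \<ge> 4 \<or> deg G c \<ge> 4 \<or> deg G g \<ge> 4"
        by (rule k4_deg[OF ug cg c5]) (use V ab ac ag dd E eab in auto)
      moreover
      { assume dg: "deg G a \<ge> 4"
        have nc: "\<not> conforming_split G D a (nbrs G a - {b, c}) {b, c}"
          by (rule splitNC[where C=X13 and C'=X23 and v=a and a=g and b=b and a'=g and b'=c and w=g])
             (use X13 X23 xs n(3) ag dd vX13 vX23 in auto)
        have ?thesis
          by (rule GoodIS[where ka=True and za=a and kb=False and zb=c and kc=False and zc=g
                and v=a and p=b and q=c])
             (use nc dg ab ac ag eab E dd e1 in \<open>auto simp: chok_def cA_def cR_def insert_commute\<close>) }
      moreover
      { assume dg: "deg G b \<ge> 4"
        have nc: "\<not> conforming_split G D b (nbrs G b - {a, c}) {a, c}"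
          by (rule splitNC[where C=X13 and C'=Dd and v=b and a=g and b=a and a'=g and b'=c and w=g])
             (use X13 Dd xs W1 W2 m(2) ag dd vX13 in \<open>auto simp: insert_commute\<close>)
        have ?thesis
          by (rule GoodIS[where ka=True and za=a and kb=False and zb=c and kc=False and zc=g
                and v=b and p=a and q=c])
             (use nc dg ab ac ag eab E dd e1 in \<open>auto simp: chok_def cA_def cR_def insert_commute\<close>) }
      moreover
      { assume dg: "deg G c \<ge> 4"
        have nc: "\<not> conforming_split G D c (nbrs G c - {a, b}) {a, b}"
          by (rule splitNC[where C=X23 and C'=Dd and v=c and a=g and b=a and a'=g and b'=b and w=g])
             (use X23 Dd xs W1 W3 m(3) ag ac dd vX23 in \<open>auto simp: insert_commute\<close>)
        have ?thesis
          by (rule GoodIS[where ka=False and za=b and kb=True and zb=c and kc=False and zc=g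
                and v=c and p=a and q=b])
             (use nc dg ab ac ag eab E dd e2 in \<open>auto simp: chok_def cA_def cR_def insert_commute\<close>) }
      moreover
      { assume dg: "deg G g \<ge> 4"
        have nc: "\<not> conforming_split G D g (nbrs G g - {a, c}) {a, c}"
          by (rule splitNC[where C=X13 and C'=Dd and v=g and a=b and b=a and a'=b and b'=c and w=b])
             (use X13 Dd xs W2 W3 m(2) ab ag dd vX13 in \<open>auto simp: insert_commute\<close>)
        have ?thesis
          by (rule GoodIS[where ka=False and za=b and kb=False and zb=c and kc=True and zc=g
                and v=g and p=a and q=c])
             (use nc dg ab ac ag eab E dd e3 in \<open>auto simp: chok_def cA_def cR_def insert_commute\<close>) }
      ultimately show ?thesis by blast
    qed
  qed
qed

lemma comb_main:
  assumes "isloc G l0" "isloc G l1" "isloc G l2" "P3 D l0 l1 l2"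
  shows "Good G D l0 l1 l2"
proof -
  have k1': "Good G D e {u} {w}" if h: "e \<in> edges G" "u \<in> verts G" "w \<in> verts G" "P3 D e {u} {w}" for e u w
  proof -
    obtain a b where "e = {a, b}" "a \<noteq> b" using ugraph_edge[OF ug h(1)] by metis
    then show ?thesis using case_k1[of a b u w] h by auto
  qed
  consider (v0) v0 where "v0 \<in> verts G" "l0 = {v0}" | (e0) "l0 \<in> edges G" using assms(1) unfolding isloc_def by blast
  then show ?thesis
  proof cases
    case v0
    consider (v1) v1 where "v1 \<in> verts G" "l1 = {v1}" | (e1) "l1 \<in> edges G" using assms(2) unfolding isloc_def by blast
    then show ?thesis
    proof cases
      case v1
      consider (v2) v2 where "v2 \<in> verts G" "l2 = {v2}" | (e2) "l2 \<in> edges G" using assms(3) unfolding isloc_def by blast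
      then show ?thesis
      proof cases
        case v2 then show ?thesis using case_k0 v0 v1 assms(4) by auto
      next
        case e2
        have "P3 D l2 l1 l0" using P3_swap01[OF P3_swap12[OF P3_swap01[OF assms(4)]]] .
        then have "Good G D l2 l1 l0" using k1' e2 v0 v1 by auto
        then show ?thesis using Good_swap01[OF Good_swap12[OF Good_swap01]] by blast
      qed
    next
      case e1
      consider (v2) v2 where "v2 \<in> verts G" "l2 = {v2}" | (e2) "l2 \<in> edges G" using assms(3) unfolding isloc_def by blast
      then show ?thesis
      proof cases
        case v2
        have "Good G D l1 l0 l2" using k1' e1 v0 v2 P3_swap01[OF assms(4)] by auto
        then show ?thesis using Good_swap01 by blast
      next
        case e2
        have "P3 D l1 l2 l0" using P3_swap12[OF P3_swap01[OF assms(4)]] .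
        then have "Good G D l1 l2 l0" using case_k2 e1 e2 v0 by auto
        then have "Good G D l1 l0 l2" using Good_swap12 by blast
        then show ?thesis using Good_swap01 by blast
      qed
    qed
  next
    case e0
    consider (v1) v1 where "v1 \<in> verts G" "l1 = {v1}" | (e1) "l1 \<in> edges G" using assms(2) unfolding isloc_def by blast
    then show ?thesis
    proof cases
      case v1
      consider (v2) v2 where "v2 \<in> verts G" "l2 = {v2}" | (e2) "l2 \<in> edges G" using assms(3) unfolding isloc_def by blast
      then show ?thesis
      proof cases
        case v2 then show ?thesis using k1' e0 v1 assms(4) by auto
      next
        case e2
        have "Good G D l0 l2 l1" using case_k2 e0 e2 v1 P3_swap12[OF assms(4)] by auto
        then show ?thesis using Good_swap12 by blast
      qed
    next
      case e1
      consider (v2) v2 where "v2 \<in> verts G" "l2 = {v2}" | (e2) "l2 \<in> edges G" using assms(3) unfolding isloc_def by blast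
      then show ?thesis
      proof cases
        case v2 then show ?thesis using case_k2 e0 e1 assms(4) by auto
      next
        case e2 then show ?thesis using case_k3 e0 e1 assms(4) by auto
      qed
    qed
  qed
qed

end



lemma interior_iff:
  assumes "length p \<ge> 2"
  shows "h \<in> interior p \<longleftrightarrow> (\<exists>j. 0 < j \<and> j < length p - 1 \<and> p ! j = h)"
proof -
  have len: "length (butlast (tl p)) = length p - 2" by simp
  have nth: "butlast (tl p) ! j = p ! Suc j" if "j < length p - 2" for j
    using that assms by (simp add: nth_butlast nth_tl)
  show ?thesis
  proof
    assume "h \<in> interior p"
    then obtain j where "j < length (butlast (tl p))" "butlast (tl p) ! j = h"
      unfolding interior_def by (metis in_set_conv_nth)
    then show "\<exists>j. 0 < j \<and> j < length p - 1 \<and> p ! j = h"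
      using len nth by (intro exI[of _ "Suc j"]) auto
  next
    assume "\<exists>j. 0 < j \<and> j < length p - 1 \<and> p ! j = h"
    then obtain j where j: "0 < j" "j < length p - 1" "p ! j = h" by blast
    then obtain i where i: "j = Suc i" by (cases j) auto
    have "i < length (butlast (tl p))" using j i len by simp
    moreover have "butlast (tl p) ! i = h" using nth[of i] j i by simp
    ultimately show "h \<in> interior p" unfolding interior_def by (metis nth_mem)
  qed
qed

lemma set_decomp:
  assumes "length p \<ge> 2"
  shows "set p = insert (hd p) (insert (last p) (interior p))"
proof -
  have ne: "p \<noteq> []" using assms by auto
  have "h \<in> set p \<longleftrightarrow> h = hd p \<or> h = last p \<or> h \<in> interior p" for h
  proof
    assume "h \<in> set p"
    then obtain j where j: "j < length p" "p ! j = h" by (metis in_set_conv_nth)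
    show "h = hd p \<or> h = last p \<or> h \<in> interior p"
    proof (cases "j = 0")
      case True then show ?thesis using j ne by (simp add: hd_conv_nth)
    next
      case False
      show ?thesis
      proof (cases "j = length p - 1")
        case True then show ?thesis using j ne by (simp add: last_conv_nth)
      next
        case F2: False
        then have "j < length p - 1" using j by simp
        then show ?thesis using interior_iff[OF assms] j False by auto
      qed
    qed
  next
    assume "h = hd p \<or> h = last p \<or> h \<in> interior p"
    then show "h \<in> set p"
    proof (elim disjE)
      assume "h = hd p" then show ?thesis using ne by simp
    next
      assume "h = last p" then show ?thesis using ne by simp
    next
      assume "h \<in> interior p"
      then obtain j where "j < length p - 1" "p ! j = h" using interior_iff[OF assms] by blast
      then show ?thesis by (metis less_imp_diff_less nth_mem diff_less_mono2 less_nat_zero_code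
            not_less_eq order.strict_trans2 zero_less_diff le_eq_less_or_eq diff_le_self)
    qed
  qed
  then show ?thesis by auto
qed

lemma in_take_iff: "h \<in> set (take l p) \<longleftrightarrow> (\<exists>j. j < l \<and> j < length p \<and> p ! j = h)"
  by (auto simp: in_set_conv_nth)

lemma in_drop_iff: "h \<in> set (drop m p) \<longleftrightarrow> (\<exists>j. m \<le> j \<and> j < length p \<and> p ! j = h)"
proof
  assume "h \<in> set (drop m p)"
  then obtain i where "i < length (drop m p)" "drop m p ! i = h" by (metis in_set_conv_nth)
  then show "\<exists>j. m \<le> j \<and> j < length p \<and> p ! j = h" by (intro exI[of _ "m + i"]) auto
next
  assume "\<exists>j. m \<le> j \<and> j < length p \<and> p ! j = h"
  then obtain j where j: "m \<le> j" "j < length p" "p ! j = h" by blast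
  then have "j - m < length (drop m p)" "drop m p ! (j - m) = h" by auto
  then show "h \<in> set (drop m p)" by (metis nth_mem)
qed

lemma butlast_not_last:
  assumes "distinct p" "h \<in> set (butlast p)"
  shows "h \<noteq> last p"
  using assms by (metis append_butlast_last_id butlast.simps(1) distinct_append disjoint_iff
      empty_iff empty_set list.set_intros(1))



definition locf :: "'a ugr \<Rightarrow> ('a \<Rightarrow> 'b) \<Rightarrow> ('a set \<Rightarrow> 'b list) \<Rightarrow> 'b \<Rightarrow> 'a set" where
  "locf G phi P h = (if h \<in> phi ` verts G then {inv_into (verts G) phi h}
      else (THE e. e \<in> edges G \<and> h \<in> interior (P e)))"

definition ext_model :: "'b ugr \<Rightarrow> 'a ugr \<Rightarrow> ('a \<Rightarrow> 'b set) \<Rightarrow> 'b set \<Rightarrow> 'a set set \<Rightarrow> 'a set \<Rightarrow> bool" where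
  "ext_model H G B T R A \<longleftrightarrow>
   (\<forall>z\<in>verts G. B z \<noteq> {} \<and> B z \<subseteq> verts H \<and> connected_set H (B z)) \<and>
   (\<forall>z\<in>verts G. \<forall>z'\<in>verts G. z \<noteq> z' \<longrightarrow> B z \<inter> B z' = {}) \<and>
   (\<forall>e\<in>edges G - R. \<exists>a b h h'. e = {a, b} \<and> h \<in> B a \<and> h' \<in> B b \<and> {h, h'} \<in> edges H) \<and>
   T \<noteq> {} \<and> T \<subseteq> verts H \<and> connected_set H T \<and> (\<forall>z\<in>verts G. T \<inter> B z = {}) \<and>
   (\<forall>z\<in>A. \<exists>h\<in>T. \<exists>h'\<in>B z. {h, h'} \<in> edges H)"

locale sdm =
  fixes G :: "'a ugr" and H :: "'b ugr" and S :: "'b ugr" and phi :: "'a \<Rightarrow> 'b"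
    and P :: "'a set \<Rightarrow> 'b list"
  assumes ugG: "ugraph G" and sub: "subgraph S H" and sdm: "subdivision_model G S phi P"
begin

lemma sdm_all:
  "inj_on phi (verts G) \<and> phi ` verts G \<subseteq> verts S \<and>
     (\<forall>e\<in>edges G. is_path S (P e) \<and> {hd (P e), last (P e)} = phi ` e \<and>
        interior (P e) \<inter> phi ` verts G = {}) \<and>
     (\<forall>e\<in>edges G. \<forall>e'\<in>edges G. e \<noteq> e' \<longrightarrow> interior (P e) \<inter> set (P e') = {}) \<and>
     verts S = phi ` verts G \<union> (\<Union>e\<in>edges G. set (P e)) \<and>
     edges S = (\<Union>e\<in>edges G. path_edges (P e))"
  using sdm unfolding subdivision_model_def .

lemma inj: "inj_on phi (verts G)" using sdm_all by (rule conjunct1)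
lemma Pe: "e \<in> edges G \<Longrightarrow> is_path S (P e)" using sdm_all by simp
lemma Phl: "e \<in> edges G \<Longrightarrow> {hd (P e), last (P e)} = phi ` e" using sdm_all by simp
lemma Pint: "e \<in> edges G \<Longrightarrow> interior (P e) \<inter> phi ` verts G = {}" using sdm_all by simp
lemma Pdisj: "e \<in> edges G \<Longrightarrow> e' \<in> edges G \<Longrightarrow> e \<noteq> e' \<Longrightarrow> interior (P e) \<inter> set (P e') = {}"
  using sdm_all by simp
lemma vS: "verts S = phi ` verts G \<union> (\<Union>e\<in>edges G. set (P e))" using sdm_all by simp
lemma eSH: "edges S \<subseteq> edges H" using sub unfolding subgraph_def by simp
lemma vSH: "verts S \<subseteq> verts H" using sub unfolding subgraph_def by simp
lemma Plen: "e \<in> edges G \<Longrightarrow> length (P e) \<ge> 2 \<and> distinct (P e) \<and> set (P e) \<subseteq> verts S"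
  using Pe unfolding is_path_def by simp
lemma Pedge: "e \<in> edges G \<Longrightarrow> Suc i < length (P e) \<Longrightarrow> {P e ! i, P e ! Suc i} \<in> edges H"
proof -
  assume "e \<in> edges G" "Suc i < length (P e)"
  then have "{P e ! i, P e ! Suc i} \<in> edges S" using Pe unfolding is_path_def by simp
  then show ?thesis using eSH by blast
qed
lemma Pchain: "e \<in> edges G \<Longrightarrow> chain H (P e)"
  using chain_mono[OF path_chain[OF Pe] eSH] .

definition hv :: "'a set \<Rightarrow> 'a" where "hv e = inv_into (verts G) phi (hd (P e))"
definition lv :: "'a set \<Rightarrow> 'a" where "lv e = inv_into (verts G) phi (last (P e))"

lemma hv_lv:
  assumes e: "e \<in> edges G"
  shows "hv e \<in> e \<and> phi (hv e) = hd (P e) \<and> lv e \<in> e \<and> phi (lv e) = last (P e) \<and>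
         hv e \<noteq> lv e \<and> e = {hv e, lv e} \<and> hv e \<in> verts G \<and> lv e \<in> verts G"
proof -
  have eV: "e \<subseteq> verts G" using edge_sub[OF ugG e] .
  have h: "hd (P e) \<in> phi ` e" "last (P e) \<in> phi ` e" using Phl[OF e] by auto
  obtain a where a: "a \<in> e" "hd (P e) = phi a" using h(1) by auto
  obtain b where b: "b \<in> e" "last (P e) = phi b" using h(2) by auto
  have ha: "hv e = a" unfolding hv_def using a eV inv_into_f_f[OF inj] by auto
  have hb: "lv e = b" unfolding lv_def using b eV inv_into_f_f[OF inj] by auto
  have l: "length (P e) \<ge> 2" "distinct (P e)" using Plen[OF e] by auto
  have "hd (P e) \<noteq> last (P e)"
  proof -
    have ne: "P e \<noteq> []" using l by auto
    have "hd (P e) = P e ! 0" "last (P e) = P e ! (length (P e) - 1)"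
      using hd_conv_nth[OF ne] last_conv_nth[OF ne] by auto
    moreover have "P e ! 0 \<noteq> P e ! (length (P e) - 1)"
      using nth_eq_iff_index_eq[OF l(2), of 0 "length (P e) - 1"] l(1) ne by simp
    ultimately show ?thesis by simp
  qed
  then have ab: "a \<noteq> b" using a b by auto
  obtain u v where uv: "e = {u, v}" "u \<noteq> v" using ugraph_edge[OF ugG e] by metis
  have "e = {a, b}" using uv a(1) b(1) ab by auto
  then show ?thesis using ha hb a b ab eV by auto
qed

end

locale hs0 = sdm G H S phi P
  for G :: "'a ugr" and H :: "'b ugr" and S :: "'b ugr" and phi :: "'a \<Rightarrow> 'b"
    and P :: "'a set \<Rightarrow> 'b list" +
  fixes x :: 'b and L :: "nat \<Rightarrow> 'b list"
  assumes xH: "x \<in> verts H" and xS: "x \<notin> verts S"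
    and Lp: "\<And>i. i < 3 \<Longrightarrow> is_path H (L i) \<and> hd (L i) = x \<and> last (L i) \<in> verts S \<and>
                            interior (L i) \<inter> verts S = {}"
begin

definition y :: "nat \<Rightarrow> 'b" where "y i = last (L i)"
definition loc :: "nat \<Rightarrow> 'a set" where "loc i = locf G phi P (y i)"

lemma y_cases:
  assumes i: "i < 3"
  shows "(y i \<in> phi ` verts G \<and> loc i = {inv_into (verts G) phi (y i)}) \<or>
         (y i \<notin> phi ` verts G \<and> loc i \<in> edges G \<and> y i \<in> interior (P (loc i)))"
proof (cases "y i \<in> phi ` verts G")
  case True then show ?thesis unfolding loc_def locf_def by simp
next
  case False
  have yS: "y i \<in> verts S" using Lp[OF i] unfolding y_def by simp
  have "y i \<in> phi ` verts G \<union> (\<Union>e\<in>edges G. set (P e))" using yS by (subst vS[symmetric])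
  then have "y i \<in> (\<Union>e\<in>edges G. set (P e))" using False by (metis UnE)
  then obtain e where e: "e \<in> edges G" "y i \<in> set (P e)" by (rule UN_E)
  have hl: "hd (P e) \<in> phi ` verts G" "last (P e) \<in> phi ` verts G"
    using hv_lv[OF e(1)] by (metis imageI)+
  have "y i \<in> insert (hd (P e)) (insert (last (P e)) (interior (P e)))"
    using e(2) set_decomp[of "P e"] Plen[OF e(1)] by simp
  then have yi: "y i \<in> interior (P e)" using hl False by (metis insertE)
  have uniq: "e' = e" if "e' \<in> edges G \<and> y i \<in> interior (P e')" for e'
  proof (rule ccontr)
    assume "e' \<noteq> e"
    then have "interior (P e') \<inter> set (P e) = {}" using Pdisj[of e' e] that e(1) by simp
    then show False using that e(2) by blast
  qed
  have the: "(THE e. e \<in> edges G \<and> y i \<in> interior (P e)) = e"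
    by (rule the_equality) (use e(1) yi uniq in blast)+
  have "loc i = e" unfolding loc_def locf_def using False the by (simp only: if_False)
  then show ?thesis using False e yi by simp
qed

lemma loc_E: "i < 3 \<Longrightarrow> loc i \<in> edges G \<Longrightarrow> y i \<in> interior (P (loc i)) \<and> y i \<notin> phi ` verts G"
proof -
  assume i: "i < 3" and E: "loc i \<in> edges G"
  show ?thesis
  proof (cases "y i \<in> phi ` verts G")
    case True
    then have "loc i = {inv_into (verts G) phi (y i)}" using y_cases[OF i] by auto
    then obtain u v where "{inv_into (verts G) phi (y i)} = {u, v}" "u \<noteq> v"
      using ugraph_edge[OF ugG E] by metis
    then have False by (metis insertI1 insert_commute singletonD)
    then show ?thesis ..
  next
    case False then show ?thesis using y_cases[OF i] by auto
  qed
qed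

lemma loc_V:
  assumes i: "i < 3" and nE: "loc i \<notin> edges G"
  shows "\<exists>v\<in>verts G. loc i = {v} \<and> phi v = y i"
proof -
  have h: "y i \<in> phi ` verts G" "loc i = {inv_into (verts G) phi (y i)}" using y_cases[OF i] nE by auto
  have "inv_into (verts G) phi (y i) \<in> verts G" using inv_into_into[OF h(1)] .
  moreover have "phi (inv_into (verts G) phi (y i)) = y i" using f_inv_into_f[OF h(1)] .
  ultimately show ?thesis using h(2) by blast
qed

lemma phi_in_P:
  assumes e: "e \<in> edges G" and v: "v \<in> verts G"
  shows "phi v \<in> set (P e) \<longleftrightarrow> v \<in> e"
proof
  assume a: "phi v \<in> set (P e)"
  have hl: "hv e \<in> e" "lv e \<in> e" "phi (hv e) = hd (P e)" "phi (lv e) = last (P e)"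
    "hv e \<in> verts G" "lv e \<in> verts G" using hv_lv[OF e] by auto
  have "phi v \<in> insert (hd (P e)) (insert (last (P e)) (interior (P e)))"
    using a set_decomp[of "P e"] Plen[OF e] by simp
  moreover have "phi v \<notin> interior (P e)" using Pint[OF e] v by blast
  ultimately have "phi v = phi (hv e) \<or> phi v = phi (lv e)" using hl by simp
  then have "v = hv e \<or> v = lv e" using inj v hl(5,6) unfolding inj_on_def by metis
  then show "v \<in> e" using hl by blast
next
  assume "v \<in> e"
  then have "v = hv e \<or> v = lv e" using hv_lv[OF e] by blast
  moreover have "hd (P e) \<in> set (P e)" "last (P e) \<in> set (P e)" using Plen[OF e]
    by (metis hd_in_set last_in_set list.size(3) not_numeral_le_zero)+
  ultimately show "phi v \<in> set (P e)" using hv_lv[OF e] by auto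
qed

lemma hold_ind:
  assumes i: "i < 3" and C: "C \<subseteq> edges G"
  shows "y i \<in> induced_dverts P C \<longleftrightarrow> hold C (loc i)"
proof (cases "loc i \<in> edges G")
  case True
  have yi: "y i \<in> interior (P (loc i))" using loc_E[OF i True] by simp
  have ns: "\<not> (\<exists>v. loc i = {v})"
  proof
    assume "\<exists>v. loc i = {v}"
    then obtain v where v: "loc i = {v}" by blast
    obtain a b where "loc i = {a, b}" "a \<noteq> b" using ugraph_edge[OF ugG True] by metis
    then show False using v by (metis insertI1 insert_commute singletonD)
  qed
  have "y i \<in> induced_dverts P C \<longleftrightarrow> loc i \<in> C"
  proof
    assume "y i \<in> induced_dverts P C"
    then obtain e where e: "e \<in> C" "y i \<in> set (P e)" unfolding induced_dverts_def by blast
    show "loc i \<in> C"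
    proof (rule ccontr)
      assume "loc i \<notin> C"
      then have "loc i \<noteq> e" using e by blast
      then have "interior (P (loc i)) \<inter> set (P e) = {}" using Pdisj True C e(1) by blast
      then show False using yi e(2) by blast
    qed
  next
    assume "loc i \<in> C"
    moreover have "y i \<in> set (P (loc i))" using yi unfolding interior_def
      by (metis in_set_butlastD list.sel(2) list.set_sel(2))
    ultimately show "y i \<in> induced_dverts P C" unfolding induced_dverts_def by blast
  qed
  then show ?thesis unfolding hold_def using ns by blast
next
  case False
  obtain v where v: "v \<in> verts G" "loc i = {v}" "phi v = y i" using loc_V[OF i False] by blast
  have nC: "{v} \<notin> C"
  proof
    assume "{v} \<in> C"
    then obtain a b where "{v} = {a, b}" "a \<noteq> b" using ugraph_edge[OF ugG] C by blast
    then show False by (metis insertI1 insert_commute singletonD)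
  qed
  have "y i \<in> induced_dverts P C \<longleftrightarrow> (\<exists>e\<in>C. v \<in> e)"
    unfolding induced_dverts_def using phi_in_P v C by (metis (no_types, lifting) UN_iff subsetD)
  also have "\<dots> \<longleftrightarrow> v \<in> dverts C" unfolding dverts_def by blast
  finally show ?thesis unfolding hold_def using v(2) nC by auto
qed

end

locale hsc = hs0 G H S phi P x L
  for G :: "'a ugr" and H :: "'b ugr" and S :: "'b ugr" and phi :: "'a \<Rightarrow> 'b"
    and P :: "'a set \<Rightarrow> 'b list" and x :: 'b and L :: "nat \<Rightarrow> 'b list" +
  fixes kk :: "nat \<Rightarrow> bool" and zz :: "nat \<Rightarrow> 'a"
  assumes ch: "\<And>i. i < 3 \<Longrightarrow> chok G (locf G phi P (last (L i))) (kk i) (zz i)"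
    and ld: "\<And>i j. i < 3 \<Longrightarrow> j < 3 \<Longrightarrow> i \<noteq> j \<Longrightarrow>
               locf G phi P (last (L i)) \<noteq> locf G phi P (last (L j))"



context hsc
begin

definition kidx :: "nat \<Rightarrow> nat" where
  "kidx i = (SOME k. 0 < k \<and> k < length (P (loc i)) - 1 \<and> P (loc i) ! k = y i)"

lemma kidx:
  assumes "i < 3" "loc i \<in> edges G"
  shows "0 < kidx i \<and> kidx i < length (P (loc i)) - 1 \<and> P (loc i) ! kidx i = y i"
proof -
  have "y i \<in> interior (P (loc i))" using loc_E[OF assms] by simp
  then have "\<exists>k. 0 < k \<and> k < length (P (loc i)) - 1 \<and> P (loc i) ! k = y i"
    using interior_iff[of "P (loc i)"] Plen[OF assms(2)] by simp
  then show ?thesis unfolding kidx_def by (rule someI_ex)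
qed

definition isport :: "'a set \<Rightarrow> bool" where "isport e = (\<exists>i<3. loc i = e)"
definition pidx :: "'a set \<Rightarrow> nat" where "pidx e = (SOME i. i < 3 \<and> loc i = e)"

lemma pidx: "i < 3 \<Longrightarrow> pidx (loc i) = i"
proof -
  assume i: "i < 3"
  have "\<exists>i'. i' < 3 \<and> loc i' = loc i" using i by blast
  then have s: "pidx (loc i) < 3 \<and> loc (pidx (loc i)) = loc i" unfolding pidx_def by (rule someI_ex)
  show ?thesis
  proof (rule ccontr)
    assume "pidx (loc i) \<noteq> i"
    then have "loc (pidx (loc i)) \<noteq> loc i" using ld[of "pidx (loc i)" i] s i unfolding loc_def y_def by blast
    then show False using s by simp
  qed
qed

definition lc :: "'a set \<Rightarrow> nat" where
  "lc e = (if isport e then (if kk (pidx e) then kidx (pidx e)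
       else if zz (pidx e) = hv e then Suc (kidx (pidx e)) else kidx (pidx e)) else 1)"

definition mc :: "'a set \<Rightarrow> nat" where
  "mc e = (if isport e then (if kk (pidx e) then Suc (kidx (pidx e))
       else if zz (pidx e) = hv e then Suc (kidx (pidx e)) else kidx (pidx e)) else 1)"

lemma cut_port:
  assumes i: "i < 3"
  shows "(kk i \<longrightarrow> lc (loc i) = kidx i \<and> mc (loc i) = Suc (kidx i)) \<and>
         (\<not> kk i \<and> zz i = hv (loc i) \<longrightarrow> lc (loc i) = Suc (kidx i) \<and> mc (loc i) = Suc (kidx i)) \<and>
         (\<not> kk i \<and> zz i \<noteq> hv (loc i) \<longrightarrow> lc (loc i) = kidx i \<and> mc (loc i) = kidx i)"
proof -
  have "isport (loc i)" unfolding isport_def using i by blast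
  then show ?thesis unfolding lc_def mc_def using pidx[OF i] by simp
qed

lemma cut:
  assumes e: "e \<in> edges G"
  shows "1 \<le> lc e \<and> lc e \<le> mc e \<and> mc e \<le> length (P e) - 1"
proof (cases "isport e")
  case True
  then obtain i where i: "i < 3" "loc i = e" unfolding isport_def by blast
  have k: "0 < kidx i" "kidx i < length (P e) - 1" using kidx[of i] i e by auto
  show ?thesis using cut_port[OF i(1)] k i(2) by (cases "kk i"; cases "zz i = hv (loc i)") auto
next
  case False
  have "length (P e) \<ge> 2" using Plen[OF e] by simp
  then show ?thesis unfolding lc_def mc_def using False by simp
qed

lemma cut_eq:
  assumes e: "e \<in> edges G" and nk: "\<And>i. i < 3 \<Longrightarrow> loc i = e \<Longrightarrow> \<not> kk i"
  shows "lc e = mc e"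
proof (cases "isport e")
  case True
  then obtain i where i: "i < 3" "loc i = e" unfolding isport_def by blast
  show ?thesis using cut_port[OF i(1)] nk[OF i] i(2) by (cases "zz i = hv (loc i)") auto
next
  case False
  then show ?thesis unfolding lc_def mc_def by simp
qed

definition BB :: "'a \<Rightarrow> 'b set" where
  "BB z = insert (phi z) ((\<Union>e\<in>{e\<in>edges G. hv e = z}. set (take (lc e) (P e))) \<union>
                          (\<Union>e\<in>{e\<in>edges G. lv e = z}. set (drop (mc e) (P e))))"

definition TT :: "'b set" where
  "TT = (\<Union>i\<in>{0, 1, 2}. set (if kk i then L i else butlast (L i)))"

lemma memB:
  assumes "h \<in> BB z"
  shows "h = phi z \<or> (\<exists>e\<in>edges G. \<exists>j<length (P e). P e ! j = h \<and>
           ((j < lc e \<and> hv e = z) \<or> (mc e \<le> j \<and> lv e = z)))"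
proof -
  have "h = phi z \<or> h \<in> (\<Union>e\<in>{e\<in>edges G. hv e = z}. set (take (lc e) (P e))) \<or>
        h \<in> (\<Union>e\<in>{e\<in>edges G. lv e = z}. set (drop (mc e) (P e)))"
    using assms unfolding BB_def by simp
  then show ?thesis
  proof (elim disjE)
    assume "h \<in> (\<Union>e\<in>{e\<in>edges G. hv e = z}. set (take (lc e) (P e)))"
    then obtain e where e: "e \<in> edges G" "hv e = z" "h \<in> set (take (lc e) (P e))" by blast
    then obtain j where "j < lc e" "j < length (P e)" "P e ! j = h" unfolding in_take_iff by blast
    then show ?thesis using e by blast
  next
    assume "h \<in> (\<Union>e\<in>{e\<in>edges G. lv e = z}. set (drop (mc e) (P e)))"
    then obtain e where e: "e \<in> edges G" "lv e = z" "h \<in> set (drop (mc e) (P e))" by blast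
    then obtain j where "mc e \<le> j" "j < length (P e)" "P e ! j = h" unfolding in_drop_iff by blast
    then show ?thesis using e by blast
  qed simp
qed

lemma inB_take: "e \<in> edges G \<Longrightarrow> j < lc e \<Longrightarrow> j < length (P e) \<Longrightarrow> P e ! j \<in> BB (hv e)"
proof -
  assume a: "e \<in> edges G" "j < lc e" "j < length (P e)"
  then have "P e ! j \<in> set (take (lc e) (P e))" unfolding in_take_iff by blast
  then have "P e ! j \<in> (\<Union>e'\<in>{e'\<in>edges G. hv e' = hv e}. set (take (lc e') (P e')))" using a(1) by blast
  then show ?thesis unfolding BB_def by (rule insertI2[OF UnI1])
qed

lemma inB_drop: "e \<in> edges G \<Longrightarrow> mc e \<le> j \<Longrightarrow> j < length (P e) \<Longrightarrow> P e ! j \<in> BB (lv e)"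
proof -
  assume a: "e \<in> edges G" "mc e \<le> j" "j < length (P e)"
  then have "P e ! j \<in> set (drop (mc e) (P e))" unfolding in_drop_iff by blast
  then have "P e ! j \<in> (\<Union>e'\<in>{e'\<in>edges G. lv e' = lv e}. set (drop (mc e') (P e')))" using a(1) by blast
  then show ?thesis unfolding BB_def by (rule insertI2[OF UnI2])
qed

lemma phiB: "phi z \<in> BB z" unfolding BB_def by simp

lemma nth_ends:
  assumes e: "e \<in> edges G"
  shows "P e ! 0 = phi (hv e) \<and> P e ! (length (P e) - 1) = phi (lv e)"
proof -
  have ne: "P e \<noteq> []" using Plen[OF e] by auto
  show ?thesis using hd_conv_nth[OF ne] last_conv_nth[OF ne] hv_lv[OF e] by simp
qed

lemma own:
  assumes e: "e \<in> edges G" and j: "j < length (P e)"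
    and o: "(j < lc e \<and> hv e = z) \<or> (mc e \<le> j \<and> lv e = z)" and ph: "P e ! j \<in> phi ` verts G"
  shows "P e ! j = phi z"
proof -
  have ni: "\<not> (0 < j \<and> j < length (P e) - 1)"
  proof
    assume "0 < j \<and> j < length (P e) - 1"
    then have "P e ! j \<in> interior (P e)" using interior_iff[of "P e"] Plen[OF e] by blast
    then show False using Pint[OF e] ph by blast
  qed
  have c: "1 \<le> lc e" "lc e \<le> mc e" "mc e \<le> length (P e) - 1" using cut[OF e] by auto
  show ?thesis
  proof (cases "j < lc e \<and> hv e = z")
    case True
    then have "j = 0" using ni c by linarith
    then show ?thesis using nth_ends[OF e] True by simp
  next
    case False
    then have o2: "mc e \<le> j" "lv e = z" using o by auto
    then have "j = length (P e) - 1" using ni c j by linarith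
    then show ?thesis using nth_ends[OF e] o2 by simp
  qed
qed

lemma notphi:
  assumes e: "e \<in> edges G" and j: "j < length (P e)" and ph: "P e ! j \<notin> phi ` verts G"
  shows "P e ! j \<in> interior (P e) \<and> 0 < j \<and> j < length (P e) - 1"
proof -
  have V: "hv e \<in> verts G" "lv e \<in> verts G" using hv_lv[OF e] by auto
  have "j \<noteq> 0" using ph nth_ends[OF e] V by auto
  moreover have "j \<noteq> length (P e) - 1" using ph nth_ends[OF e] V by auto
  ultimately have "0 < j \<and> j < length (P e) - 1" using j by linarith
  then show ?thesis using interior_iff[of "P e"] Plen[OF e] by blast
qed

lemma B_disj:
  assumes z: "z \<in> verts G" "z' \<in> verts G" "z \<noteq> z'"
  shows "BB z \<inter> BB z' = {}"
proof (rule ccontr)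
  assume "BB z \<inter> BB z' \<noteq> {}"
  then obtain h where h: "h \<in> BB z" "h \<in> BB z'" by blast
  show False
  proof (cases "h \<in> phi ` verts G")
    case True
    have "h = phi z" using memB[OF h(1)] own True by blast
    moreover have "h = phi z'" using memB[OF h(2)] own True by blast
    ultimately show False using z inj unfolding inj_on_def by metis
  next
    case False
    have hz: "h \<noteq> phi z" "h \<noteq> phi z'" using False z by auto
    obtain e j where ej: "e \<in> edges G" "j < length (P e)" "P e ! j = h"
      "(j < lc e \<and> hv e = z) \<or> (mc e \<le> j \<and> lv e = z)" using memB[OF h(1)] hz by blast
    obtain e' j' where ej': "e' \<in> edges G" "j' < length (P e')" "P e' ! j' = h"
      "(j' < lc e' \<and> hv e' = z') \<or> (mc e' \<le> j' \<and> lv e' = z')" using memB[OF h(2)] hz by blast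
    have hi: "h \<in> interior (P e)" using notphi[OF ej(1,2)] ej(3) False by simp
    have ee: "e' = e"
    proof (rule ccontr)
      assume "e' \<noteq> e"
      then have "interior (P e) \<inter> set (P e') = {}" using Pdisj ej(1) ej'(1) by metis
      moreover have "h \<in> set (P e')" using ej'(2,3) nth_mem by metis
      ultimately show False using hi by blast
    qed
    have jj: "j' = j" using ej ej' ee nth_eq_iff_index_eq[of "P e" j j'] Plen[OF ej(1)] by auto
    have c: "lc e \<le> mc e" using cut[OF ej(1)] by simp
    show False using ej(4) ej'(4) ee jj c z(3) by auto
  qed
qed

lemma phiS: "phi ` verts G \<subseteq> verts S" by (rule conjunct1[OF conjunct2[OF sdm_all]])

lemma B_sub: "z \<in> verts G \<Longrightarrow> BB z \<subseteq> verts S"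
proof -
  assume z: "z \<in> verts G"
  have p: "phi z \<in> verts S" using z phiS by blast
  have ts: "set (take l (P e)) \<subseteq> verts S" "set (drop l (P e)) \<subseteq> verts S" if "e \<in> edges G" for e l
    using Plen[OF that] set_take_subset[of l "P e"] set_drop_subset[of l "P e"] by auto
  have a: "(\<Union>e\<in>{e\<in>edges G. hv e = z}. set (take (lc e) (P e))) \<subseteq> verts S" using ts by blast
  have b: "(\<Union>e\<in>{e\<in>edges G. lv e = z}. set (drop (mc e) (P e))) \<subseteq> verts S" using ts by blast
  show ?thesis unfolding BB_def using p a b by simp
qed

lemma B_conn: "z \<in> verts G \<Longrightarrow> connected_set H (BB z)"
proof -
  assume z: "z \<in> verts G"
  let ?F = "(\<lambda>e. set (take (lc e) (P e))) ` {e\<in>edges G. hv e = z} \<union>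
            (\<lambda>e. set (drop (mc e) (P e))) ` {e\<in>edges G. lv e = z}"
  have eq: "BB z = insert (phi z) (\<Union>?F)" unfolding BB_def by simp
  have "connected_set H X \<and> phi z \<in> X" if X: "X \<in> ?F" for X
  proof -
    { fix e assume e: "e \<in> edges G" "hv e = z" "X = set (take (lc e) (P e))"
      have c: "1 \<le> lc e" "lc e \<le> length (P e) - 1" using cut[OF e(1)] by auto
      have l2: "length (P e) \<ge> 2" using Plen[OF e(1)] by simp
      have ne0: "P e \<noteq> []" using l2 by auto
      have ne: "take (lc e) (P e) \<noteq> []" using c ne0 by simp
      have "connected_set H X" using chain_connected[OF chain_take[OF Pchain[OF e(1)]] ne] e(3) by simp
      moreover have "phi z \<in> X"
      proof -
        have "P e ! 0 \<in> set (take (lc e) (P e))"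
          unfolding in_take_iff using c l2 by (intro exI[of _ 0]) auto
        then show ?thesis using nth_ends[OF e(1)] e by simp
      qed
      ultimately have ?thesis by blast }
    moreover
    { fix e assume e: "e \<in> edges G" "lv e = z" "X = set (drop (mc e) (P e))"
      have c: "mc e \<le> length (P e) - 1" using cut[OF e(1)] by auto
      have l2: "length (P e) \<ge> 2" using Plen[OF e(1)] by simp
      have ne: "drop (mc e) (P e) \<noteq> []" using c l2 by simp
      have "connected_set H X" using chain_connected[OF chain_drop[OF Pchain[OF e(1)]] ne] e(3) by simp
      moreover have "phi z \<in> X"
      proof -
        have "P e ! (length (P e) - 1) \<in> set (drop (mc e) (P e))"
          unfolding in_drop_iff using c l2 by (intro exI[of _ "length (P e) - 1"]) auto
        then show ?thesis using nth_ends[OF e(1)] e by simp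
      qed
      ultimately have ?thesis by blast }
    ultimately show ?thesis using X by blast
  qed
  then show ?thesis unfolding eq by (rule connected_star_union)
qed

end



context hsc
begin

lemma chloc: "i < 3 \<Longrightarrow> chok G (loc i) (kk i) (zz i)"
  using ch unfolding loc_def y_def by simp

lemma Lf:
  assumes i: "i < 3"
  shows "length (L i) \<ge> 2 \<and> distinct (L i) \<and> set (L i) \<subseteq> verts H \<and> chain H (L i) \<and>
         hd (L i) = x \<and> y i \<in> verts S \<and> interior (L i) \<inter> verts S = {} \<and> last (L i) = y i"
proof -
  have p: "is_path H (L i)" "hd (L i) = x" "last (L i) \<in> verts S" "interior (L i) \<inter> verts S = {}"
    using Lp[OF i] by auto
  then show ?thesis using path_chain[OF p(1)] unfolding is_path_def y_def by auto
qed

definition TP :: "nat \<Rightarrow> 'b set" where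
  "TP i = set (if kk i then L i else butlast (L i))"

lemma TP: "i < 3 \<Longrightarrow> connected_set H (TP i) \<and> x \<in> TP i \<and> TP i \<subseteq> set (L i)"
proof -
  assume i: "i < 3"
  have l: "length (L i) \<ge> 2" "chain H (L i)" "hd (L i) = x" using Lf[OF i] by auto
  have ne: "L i \<noteq> []" using l(1) by auto
  have x0: "L i ! 0 = x" using l(3) hd_conv_nth[OF ne] by simp
  show ?thesis
  proof (cases "kk i")
    case True
    then show ?thesis unfolding TP_def using chain_connected[OF l(2) ne] x0 ne by (auto simp: hd_in_set[OF ne, unfolded l(3)])
  next
    case False
    have bt: "butlast (L i) = take (length (L i) - 1) (L i)" by (simp add: butlast_conv_take)
    have ne2: "butlast (L i) \<noteq> []" using l(1) by (cases "L i") auto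
    have c: "connected_set H (set (butlast (L i)))"
      using chain_connected[OF chain_take[OF l(2)] ne2[unfolded bt]] bt by simp
    have "x \<in> set (butlast (L i))" unfolding bt in_take_iff using l(1) x0 by (intro exI[of _ 0]) auto
    then show ?thesis unfolding TP_def using False c by (auto dest: in_set_butlastD)
  qed
qed

lemma TT_eq0: "TT = TP 0 \<union> TP 1 \<union> TP 2"
  unfolding TT_def TP_def by (simp add: Un_ac)

lemma TT_eq: "TT = insert x (\<Union> (TP ` {0, 1, 2}))"
proof -
  have "x \<in> TP 0" using TP[of 0] by simp
  then show ?thesis unfolding TT_eq0 by auto
qed

lemma TP_TT: "i < 3 \<Longrightarrow> TP i \<subseteq> TT"
proof -
  assume "i < 3"
  then have "i = 0 \<or> i = 1 \<or> i = 2" by auto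
  then show ?thesis unfolding TT_eq0 by auto
qed

lemma TT_cases: "h \<in> TT \<Longrightarrow> \<exists>i<3. h \<in> TP i"
proof -
  assume "h \<in> TT"
  then have "h \<in> TP 0 \<or> h \<in> TP 1 \<or> h \<in> TP 2" unfolding TT_eq0 by simp
  moreover have "(0::nat) < 3" "(1::nat) < 3" "(2::nat) < 3" by simp_all
  ultimately show ?thesis by blast
qed

lemma TT_conn: "connected_set H TT"
  unfolding TT_eq by (rule connected_star_union) (use TP in auto)

lemma TT_sub: "TT \<subseteq> verts H"
proof -
  have "TP i \<subseteq> verts H" if "i < 3" for i using TP[OF that] Lf[OF that] by blast
  then show ?thesis unfolding TT_eq0 by simp
qed

lemma TT_elem:
  assumes h: "h \<in> TT"
  shows "h = x \<or> (\<exists>i<3. h \<in> interior (L i) \<or> (h = y i \<and> kk i))"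
proof -
  obtain i where i: "i < 3" "h \<in> TP i" using TT_cases[OF h] by blast
  have l: "length (L i) \<ge> 2" "hd (L i) = x" "last (L i) = y i" "distinct (L i)" using Lf[OF i(1)] by auto
  have s: "set (L i) = insert x (insert (y i) (interior (L i)))" using set_decomp[OF l(1)] l by simp
  show ?thesis
  proof (cases "kk i")
    case True then show ?thesis using i s unfolding TP_def by auto
  next
    case False
    then have "h \<in> set (butlast (L i))" using i unfolding TP_def by simp
    then have "h \<noteq> y i" "h \<in> set (L i)" using butlast_not_last[OF l(4)] l(3) in_set_butlastD by auto
    then show ?thesis using s i(1) by auto
  qed
qed

lemma T_B: "z \<in> verts G \<Longrightarrow> TT \<inter> BB z = {}"
proof (rule ccontr)
  assume z: "z \<in> verts G" and "TT \<inter> BB z \<noteq> {}"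
  then obtain h where h: "h \<in> TT" "h \<in> BB z" by blast
  have hS: "h \<in> verts S" using B_sub[OF z] h(2) by blast
  have "h \<noteq> x" using hS xS by blast
  moreover have "h \<notin> interior (L i)" if "i < 3" for i using Lf[OF that] hS by blast
  ultimately obtain i where i: "i < 3" "h = y i" "kk i" using TT_elem[OF h(1)] by blast
  have E: "loc i \<in> edges G" using chloc[OF i(1)] i(3) unfolding chok_def by simp
  have yi: "y i \<in> interior (P (loc i))" "y i \<notin> phi ` verts G" using loc_E[OF i(1) E] by auto
  have k: "0 < kidx i" "kidx i < length (P (loc i)) - 1" "P (loc i) ! kidx i = y i" using kidx[OF i(1) E] by auto
  have cp: "lc (loc i) = kidx i" "mc (loc i) = Suc (kidx i)" using cut_port[OF i(1)] i(3) by auto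
  have "h \<noteq> phi z" using yi(2) z i(2) by (metis imageI)
  then obtain e j where ej: "e \<in> edges G" "j < length (P e)" "P e ! j = h"
    "(j < lc e \<and> hv e = z) \<or> (mc e \<le> j \<and> lv e = z)" using memB[OF h(2)] by blast
  have ee: "e = loc i"
  proof (rule ccontr)
    assume "e \<noteq> loc i"
    then have "interior (P (loc i)) \<inter> set (P e) = {}" using Pdisj E ej(1) by metis
    moreover have "h \<in> set (P e)" using ej(2,3) nth_mem by metis
    ultimately show False using yi(1) i(2) by blast
  qed
  have "j = kidx i" using ej(2,3) k ee i(2) nth_eq_iff_index_eq[of "P (loc i)" j "kidx i"] Plen[OF E]
    by auto
  then show False using ej(4) cp ee by auto
qed

lemma edge_real:
  assumes e: "e \<in> edges G" and nk: "\<And>i. i < 3 \<Longrightarrow> loc i = e \<Longrightarrow> \<not> kk i"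
  shows "\<exists>a b h h'. e = {a, b} \<and> h \<in> BB a \<and> h' \<in> BB b \<and> {h, h'} \<in> edges H"
proof -
  have eq: "lc e = mc e" using cut_eq[OF e nk] by blast
  have c: "1 \<le> lc e" "lc e \<le> length (P e) - 1" using cut[OF e] by auto
  have l2: "length (P e) \<ge> 2" using Plen[OF e] by simp
  have h1: "P e ! (lc e - 1) \<in> BB (hv e)" by (rule inB_take[OF e]) (use c l2 in auto)
  have h2: "P e ! (lc e) \<in> BB (lv e)" by (rule inB_drop[OF e]) (use c l2 eq in auto)
  have "{P e ! (lc e - 1), P e ! Suc (lc e - 1)} \<in> edges H" by (rule Pedge[OF e]) (use c l2 in auto)
  then have ed: "{P e ! (lc e - 1), P e ! (lc e)} \<in> edges H" using c by simp
  show ?thesis using hv_lv[OF e] h1 h2 ed by blast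
qed

lemma T_adj:
  assumes i: "i < 3" and z: "z \<in> cA (loc i) (kk i) (zz i)"
  shows "\<exists>h\<in>TT. \<exists>h'\<in>BB z. {h, h'} \<in> edges H"
proof (cases "kk i")
  case True
  have E: "loc i \<in> edges G" using chloc[OF i] True unfolding chok_def by simp
  define e where "e = loc i"
  have zE: "z \<in> e" using z True unfolding cA_def e_def by simp
  have k: "0 < kidx i" "kidx i < length (P e) - 1" "P e ! kidx i = y i" using kidx[OF i E] unfolding e_def by auto
  have cp: "lc e = kidx i" "mc e = Suc (kidx i)" using cut_port[OF i] True unfolding e_def by auto
  have yT: "y i \<in> TT"
  proof -
    have l: "length (L i) \<ge> 2" "last (L i) = y i" using Lf[OF i] by auto
    then have "y i \<in> set (L i)" by (metis last_in_set list.size(3) not_numeral_le_zero)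
    then have "y i \<in> TP i" unfolding TP_def using True by simp
    then show ?thesis using TP_TT[OF i] by blast
  qed
  have hl: "e = {hv e, lv e}" using hv_lv E unfolding e_def by blast
  show ?thesis
  proof (cases "z = hv e")
    case True
    have "P e ! (kidx i - 1) \<in> BB (hv e)" by (rule inB_take) (use E k cp in \<open>auto simp: e_def\<close>)
    moreover have "{P e ! (kidx i - 1), P e ! Suc (kidx i - 1)} \<in> edges H"
      by (rule Pedge) (use E k in \<open>auto simp: e_def\<close>)
    ultimately have "P e ! (kidx i - 1) \<in> BB z" "{y i, P e ! (kidx i - 1)} \<in> edges H"
      using True k by (auto simp: insert_commute)
    then show ?thesis using yT by blast
  next
    case False
    then have zl: "z = lv e" using zE hl by blast
    have "P e ! Suc (kidx i) \<in> BB (lv e)" by (rule inB_drop) (use E k cp in \<open>auto simp: e_def\<close>)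
    moreover have "{P e ! (kidx i), P e ! Suc (kidx i)} \<in> edges H"
      by (rule Pedge) (use E k in \<open>auto simp: e_def\<close>)
    ultimately have "P e ! Suc (kidx i) \<in> BB z" "{y i, P e ! Suc (kidx i)} \<in> edges H"
      using zl k by auto
    then show ?thesis using yT by blast
  qed
next
  case False
  have zl: "z = zz i" "zz i \<in> loc i" using chloc[OF i] False z unfolding chok_def cA_def by auto
  have l: "length (L i) \<ge> 2" "last (L i) = y i" "is_path H (L i)" using Lf[OF i] Lp[OF i] by auto
  have ne: "L i \<noteq> []" using l(1) by auto
  define n where "n = length (L i)"
  have hT: "L i ! (n - 2) \<in> TT"
  proof -
    have "L i ! (n - 2) \<in> set (butlast (L i))" unfolding butlast_conv_take in_take_iff n_def
      using l(1) by (intro exI[of _ "length (L i) - 2"]) auto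
    then have "L i ! (n - 2) \<in> TP i" unfolding TP_def using False by simp
    then show ?thesis using TP_TT[OF i] by blast
  qed
  have ed: "{L i ! (n - 2), L i ! Suc (n - 2)} \<in> edges H" using l(3) l(1) unfolding is_path_def n_def by auto
  have ly: "L i ! Suc (n - 2) = y i" using l(1,2) last_conv_nth[OF ne] unfolding n_def
    by (metis Suc_diff_Suc Suc_1 diff_Suc_1 Suc_le_lessD)
  have yB: "y i \<in> BB z"
  proof (cases "loc i \<in> edges G")
    case E: True
    define e where "e = loc i"
    have k: "kidx i < length (P e) - 1" "P e ! kidx i = y i" using kidx[OF i E] unfolding e_def by auto
    show ?thesis
    proof (cases "zz i = hv e")
      case True
      have cp: "lc e = Suc (kidx i)" using cut_port[OF i] False True unfolding e_def by auto
      have "P e ! kidx i \<in> BB (hv e)" by (rule inB_take) (use E k cp in \<open>auto simp: e_def\<close>)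
      then show ?thesis using k True zl by simp
    next
      case F2: False
      have cp: "mc e = kidx i" using cut_port[OF i] False F2 unfolding e_def by auto
      have "zz i = lv e" using hv_lv[of e] E zl(2) F2 unfolding e_def by blast
      moreover have "P e ! kidx i \<in> BB (lv e)" by (rule inB_drop) (use E k cp in \<open>auto simp: e_def\<close>)
      ultimately show ?thesis using k zl by simp
    qed
  next
    case nE: False
    obtain v where v: "v \<in> verts G" "loc i = {v}" "phi v = y i" using loc_V[OF i nE] by blast
    then have "z = v" using zl by simp
    then show ?thesis using phiB v by metis
  qed
  show ?thesis using hT yB ed ly by metis
qed

theorem ext:
  "ext_model H G BB TT (cR (loc 0) (kk 0) \<union> cR (loc 1) (kk 1) \<union> cR (loc 2) (kk 2))
     (cA (loc 0) (kk 0) (zz 0) \<union> cA (loc 1) (kk 1) (zz 1) \<union> cA (loc 2) (kk 2) (zz 2))"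
  unfolding ext_model_def
proof (intro conjI ballI impI)
  fix z assume z: "z \<in> verts G"
  show "BB z \<noteq> {}" using phiB by blast
  show "BB z \<subseteq> verts H" using B_sub[OF z] vSH by blast
  show "connected_set H (BB z)" using B_conn[OF z] .
  show "TT \<inter> BB z = {}" using T_B[OF z] .
next
  fix z z' assume "z \<in> verts G" "z' \<in> verts G" "z \<noteq> z'"
  then show "BB z \<inter> BB z' = {}" using B_disj by blast
next
  fix e assume e: "e \<in> edges G - (cR (loc 0) (kk 0) \<union> cR (loc 1) (kk 1) \<union> cR (loc 2) (kk 2))"
  have nk: "\<not> kk i" if "i < 3" "loc i = e" for i
  proof
    assume "kk i"
    then have "e \<in> cR (loc i) (kk i)" using that unfolding cR_def by simp
    moreover have "i = 0 \<or> i = 1 \<or> i = 2" using that(1) by auto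
    ultimately show False using e by auto
  qed
  show "\<exists>a b h h'. e = {a, b} \<and> h \<in> BB a \<and> h' \<in> BB b \<and> {h, h'} \<in> edges H"
    using edge_real[OF _ nk] e by blast
next
  show "TT \<noteq> {}" unfolding TT_eq by simp
  show "TT \<subseteq> verts H" using TT_sub .
  show "connected_set H TT" using TT_conn .
next
  fix z assume "z \<in> cA (loc 0) (kk 0) (zz 0) \<union> cA (loc 1) (kk 1) (zz 1) \<union> cA (loc 2) (kk 2) (zz 2)"
  moreover have "(0::nat) < 3" "(1::nat) < 3" "(2::nat) < 3" by simp_all
  ultimately obtain i where "i < 3" "z \<in> cA (loc i) (kk i) (zz i)" by blast
  then show "\<exists>h\<in>TT. \<exists>h'\<in>BB z. {h, h'} \<in> edges H" using T_adj by blast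
qed

end



lemma ext8:
  assumes em: "ext_model H G B T {} A"
    and xs: "x1 \<in> A" "x2 \<in> A" "x3 \<in> A" "x1 \<in> verts G" "x2 \<in> verts G" "x3 \<in> verts G"
      "x1 \<noteq> x2" "x1 \<noteq> x3" "x2 \<noteq> x3"
    and nd: "\<not> (\<exists>C\<in>D. {x1, x2, x3} \<subseteq> dverts C)"
  shows "\<exists>K :: ('a + bool) ugr. has_minor H K \<and> weak_enlargement8 G D K"
proof -
  define K :: "('a + bool) ugr" where "K = (Inl ` verts G \<union> {Inr True},
          (image Inl) ` edges G \<union> {{Inr True, Inl x1}, {Inr True, Inl x2}, {Inr True, Inl x3}})"
  have w8: "weak_enlargement8 G D K" unfolding weak_enlargement8_def K_def using xs nd by blast
  have E: "\<forall>z\<in>verts G. B z \<noteq> {} \<and> B z \<subseteq> verts H \<and> connected_set H (B z)"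
    "\<forall>z\<in>verts G. \<forall>z'\<in>verts G. z \<noteq> z' \<longrightarrow> B z \<inter> B z' = {}"
    "\<forall>e\<in>edges G. \<exists>a b h h'. e = {a, b} \<and> h \<in> B a \<and> h' \<in> B b \<and> {h, h'} \<in> edges H"
    "T \<noteq> {}" "T \<subseteq> verts H" "connected_set H T" "\<forall>z\<in>verts G. T \<inter> B z = {}"
    "\<forall>z\<in>A. \<exists>h\<in>T. \<exists>h'\<in>B z. {h, h'} \<in> edges H"
    using em unfolding ext_model_def by auto
  define B' :: "'a + bool \<Rightarrow> 'b set" where "B' = case_sum B (\<lambda>_. T)"
  have "has_minor H K" unfolding has_minor_def
  proof (intro exI[of _ B'] conjI ballI impI)
    fix a assume a: "a \<in> verts K"
    have c: "(\<exists>z\<in>verts G. a = Inl z) \<or> a = Inr True" using a unfolding K_def by auto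
    have r: "B' a \<noteq> {} \<and> B' a \<subseteq> verts H \<and> connected_set H (B' a)"
      using c
    proof (elim disjE bexE)
      fix z assume "z \<in> verts G" "a = Inl z"
      then show ?thesis using E(1) unfolding B'_def by simp
    next
      assume "a = Inr True"
      then show ?thesis using E(4-6) unfolding B'_def by simp
    qed
    then show "B' a \<noteq> {}" "B' a \<subseteq> verts H" "connected_set H (B' a)" by auto
  next
    fix a b assume a: "a \<in> verts K" "b \<in> verts K" "a \<noteq> b"
    have ca: "(\<exists>z\<in>verts G. a = Inl z) \<or> a = Inr True" "(\<exists>z\<in>verts G. b = Inl z) \<or> b = Inr True"
      using a unfolding K_def by auto
    have d1: "\<And>z z'. z \<in> verts G \<Longrightarrow> z' \<in> verts G \<Longrightarrow> z \<noteq> z' \<Longrightarrow> B z \<inter> B z' = {}" using E(2) by blast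
    have d2: "\<And>z. z \<in> verts G \<Longrightarrow> T \<inter> B z = {}" "\<And>z. z \<in> verts G \<Longrightarrow> B z \<inter> T = {}" using E(7) by blast+
    show "B' a \<inter> B' b = {}" using ca(1)
    proof (elim disjE bexE)
      fix z assume z: "z \<in> verts G" "a = Inl z"
      show ?thesis using ca(2)
      proof (elim disjE bexE)
        fix z' assume z': "z' \<in> verts G" "b = Inl z'"
        then show ?thesis using z a(3) d1 unfolding B'_def by auto
      next
        assume "b = Inr True" then show ?thesis using z d2 unfolding B'_def by simp
      qed
    next
      assume r: "a = Inr True"
      show ?thesis using ca(2)
      proof (elim disjE bexE)
        fix z' assume z': "z' \<in> verts G" "b = Inl z'"
        then show ?thesis using r d2 unfolding B'_def by simp
      next
        assume "b = Inr True" then show ?thesis using r a(3) by simp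
      qed
    qed
  next
    fix e assume e: "e \<in> edges K"
    have e': "e \<in> (image Inl) ` edges G \<union> {{Inr True, Inl x1}, {Inr True, Inl x2}, {Inr True, Inl x3}}"
      using e unfolding K_def by (simp only: snd_conv)
    show "\<exists>a b h h'. e = {a, b} \<and> h \<in> B' a \<and> h' \<in> B' b \<and> {h, h'} \<in> edges H"
      using e'
    proof (rule UnE)
      assume "e \<in> (image Inl) ` edges G"
      then obtain e0 where e0: "e0 \<in> edges G" "e = Inl ` e0" by (rule imageE)
      have "\<exists>a b h h'. e0 = {a, b} \<and> h \<in> B a \<and> h' \<in> B b \<and> {h, h'} \<in> edges H"
        using bspec[OF E(3) e0(1)] .
      then obtain a b h h' where ab: "e0 = {a, b}" "h \<in> B a" "h' \<in> B b" "{h, h'} \<in> edges H"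
        by (elim exE conjE)
      have "e = {Inl a, Inl b}" using e0(2) ab(1) by simp
      moreover have "h \<in> B' (Inl a)" "h' \<in> B' (Inl b)" using ab unfolding B'_def by simp_all
      ultimately show ?thesis using ab(4) by (intro exI[of _ "Inl a"] exI[of _ "Inl b"] exI[of _ h] exI[of _ h'] conjI)
    next
      assume "e \<in> {{Inr True, Inl x1}, {Inr True, Inl x2}, {Inr True, Inl x3}}"
      then obtain z where z: "z \<in> {x1, x2, x3}" "e = {Inr True, Inl z}" by blast
      have "z \<in> A" using z(1) xs by blast
      then obtain h h' where hh: "h \<in> T" "h' \<in> B z" "{h, h'} \<in> edges H" using E(8) by blast
      have "h \<in> B' (Inr True)" "h' \<in> B' (Inl z)" using hh unfolding B'_def by simp_all
      then show ?thesis using z(2) hh(3) by (intro exI[of _ "Inr True"] exI[of _ "Inl z"] exI[of _ h] exI[of _ h'] conjI)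
    qed
  qed
  then show ?thesis using w8 by blast
qed

lemma extS:
  assumes ug: "ugraph G" and em: "ext_model H G B T R A"
    and v: "v \<in> verts G" "v \<in> A" "p \<in> A" "q \<in> A" "p \<noteq> q" "p \<in> nbrs G v" "q \<in> nbrs G v"
    and R: "R \<subseteq> {{v, p}, {v, q}}" and dg: "deg G v \<ge> 4"
    and nc: "\<not> conforming_split G D v (nbrs G v - {p, q}) {p, q}"
  shows "\<exists>K :: ('a + bool) ugr. has_minor H K \<and> enlargement3 G D K"
proof -
  define N1 where "N1 = nbrs G v - {p, q}"
  define N2 where "N2 = {p, q}"
  have fin: "finite (nbrs G v)" using nbrs_finite[OF ug] .
  have c2: "card {p, q} = 2" using v(5) by simp
  have "card N1 = card (nbrs G v) - card {p, q}" unfolding N1_def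
    by (rule card_Diff_subset) (use v(6,7) in auto)
  then have cN1: "card N1 \<ge> 2" using dg c2 unfolding deg_def by simp
  have vs: "valid_split G v N1 N2" unfolding valid_split_def N1_def N2_def
    using v dg cN1 c2 unfolding N1_def by auto
  define K where "K = split_graph G v N1 N2"
  have e3: "enlargement3 G D K" unfolding enlargement3_def K_def using vs nc unfolding N1_def N2_def by blast
  have E: "\<forall>z\<in>verts G. B z \<noteq> {} \<and> B z \<subseteq> verts H \<and> connected_set H (B z)"
    "\<forall>z\<in>verts G. \<forall>z'\<in>verts G. z \<noteq> z' \<longrightarrow> B z \<inter> B z' = {}"
    "\<forall>e\<in>edges G - R. \<exists>a b h h'. e = {a, b} \<and> h \<in> B a \<and> h' \<in> B b \<and> {h, h'} \<in> edges H"
    "T \<noteq> {}" "T \<subseteq> verts H" "connected_set H T" "\<forall>z\<in>verts G. T \<inter> B z = {}"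
    "\<forall>z\<in>A. \<exists>h\<in>T. \<exists>h'\<in>B z. {h, h'} \<in> edges H"
    using em unfolding ext_model_def by auto
  define B' :: "'a + bool \<Rightarrow> 'b set" where "B' = case_sum B (\<lambda>b. if b then B v else T)"
  have nv: "a \<noteq> v" if "a \<in> nbrs G v" for a
  proof
    assume "a = v"
    then have "{v} \<in> edges G" using that unfolding nbrs_iff by simp
    then obtain a b where "{v} = {a, b}" "a \<noteq> b" using ugraph_edge[OF ug] by metis
    then show False by (metis insertI1 insert_commute singletonD)
  qed
  have "has_minor H K" unfolding has_minor_def
  proof (intro exI[of _ B'] conjI ballI impI)
    fix a assume a: "a \<in> verts K"
    have c: "(\<exists>z\<in>verts G. a = Inl z) \<or> a = Inr True \<or> a = Inr False"
      using a unfolding K_def split_graph_def by auto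
    have r: "B' a \<noteq> {} \<and> B' a \<subseteq> verts H \<and> connected_set H (B' a)"
      using c
    proof (elim disjE bexE)
      fix z assume "z \<in> verts G" "a = Inl z"
      then show ?thesis using E(1) unfolding B'_def by simp
    next
      assume "a = Inr True"
      then show ?thesis using E(1) v(1) unfolding B'_def by simp
    next
      assume "a = Inr False"
      then show ?thesis using E(4-6) unfolding B'_def by simp
    qed
    then show "B' a \<noteq> {}" "B' a \<subseteq> verts H" "connected_set H (B' a)" by auto
  next
    fix a b assume a: "a \<in> verts K" "b \<in> verts K" "a \<noteq> b"
    have ca: "(\<exists>z\<in>verts G - {v}. a = Inl z) \<or> a = Inr True \<or> a = Inr False"
      "(\<exists>z\<in>verts G - {v}. b = Inl z) \<or> b = Inr True \<or> b = Inr False"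
      using a unfolding K_def split_graph_def by auto
    have d1: "\<And>z z'. z \<in> verts G \<Longrightarrow> z' \<in> verts G \<Longrightarrow> z \<noteq> z' \<Longrightarrow> B z \<inter> B z' = {}" using E(2) by blast
    have d2: "\<And>z. z \<in> verts G \<Longrightarrow> T \<inter> B z = {}" "\<And>z. z \<in> verts G \<Longrightarrow> B z \<inter> T = {}" using E(7) by blast+
    have tv: "B v \<inter> T = {}" "T \<inter> B v = {}" using d2 v(1) by auto
    show "B' a \<inter> B' b = {}" using ca(1)
    proof (elim disjE bexE)
      fix z assume z: "z \<in> verts G - {v}" "a = Inl z"
      show ?thesis using ca(2)
      proof (elim disjE bexE)
        fix z' assume z': "z' \<in> verts G - {v}" "b = Inl z'"
        then show ?thesis using z a(3) d1 unfolding B'_def by auto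
      next
        assume "b = Inr True" then show ?thesis using z d1 v(1) unfolding B'_def by auto
      next
        assume "b = Inr False" then show ?thesis using z d2 unfolding B'_def by auto
      qed
    next
      assume r: "a = Inr True"
      show ?thesis using ca(2)
      proof (elim disjE bexE)
        fix z' assume z': "z' \<in> verts G - {v}" "b = Inl z'"
        then show ?thesis using r d1 v(1) unfolding B'_def by auto
      next
        assume "b = Inr True" then show ?thesis using r a(3) by simp
      next
        assume "b = Inr False" then show ?thesis using r tv unfolding B'_def by simp
      qed
    next
      assume r: "a = Inr False"
      show ?thesis using ca(2)
      proof (elim disjE bexE)
        fix z' assume z': "z' \<in> verts G - {v}" "b = Inl z'"
        then show ?thesis using r d2 unfolding B'_def by auto
      next
        assume "b = Inr True" then show ?thesis using r tv unfolding B'_def by simp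
      next
        assume "b = Inr False" then show ?thesis using r a(3) by simp
      qed
    qed
  next
    fix e assume e: "e \<in> edges K"
    have r: "\<exists>a b h h'. e0 = {a, b} \<and> h \<in> B a \<and> h' \<in> B b \<and> {h, h'} \<in> edges H"
      if "e0 \<in> edges G" "e0 \<notin> R" for e0 using bspec[OF E(3)] that by simp
    have e': "e \<in> (image Inl) ` {e\<in>edges G. v \<notin> e} \<union> {{Inr True, Inr False}} \<union>
      {{Inr True, Inl a} | a. a \<in> N1} \<union> {{Inr False, Inl b} | b. b \<in> N2}"
      using e unfolding K_def split_graph_def by (simp only: snd_conv)
    consider (a) "e \<in> (image Inl) ` {e\<in>edges G. v \<notin> e}" | (b) "e = {Inr True, Inr False}"
      | (c) a where "a \<in> N1" "e = {Inr True, Inl a}" | (d) b where "b \<in> N2" "e = {Inr False, Inl b}"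
      using e' by blast
    then show "\<exists>a b h h'. e = {a, b} \<and> h \<in> B' a \<and> h' \<in> B' b \<and> {h, h'} \<in> edges H"
    proof cases
      case a
      then obtain e0 where e0: "e0 \<in> edges G" "v \<notin> e0" "e = Inl ` e0" by blast
      have "e0 \<notin> R" using R e0(2) by auto
      then have "\<exists>a b h h'. e0 = {a, b} \<and> h \<in> B a \<and> h' \<in> B b \<and> {h, h'} \<in> edges H"
        using r e0(1) by blast
      then obtain a1 b1 h h' where ab: "e0 = {a1, b1}" "h \<in> B a1" "h' \<in> B b1" "{h, h'} \<in> edges H"
        by (elim exE conjE)
      have "e = {Inl a1, Inl b1}" using e0(3) ab(1) by simp
      moreover have "h \<in> B' (Inl a1)" "h' \<in> B' (Inl b1)" using ab unfolding B'_def by simp_all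
      ultimately show ?thesis using ab(4)
        by (intro exI[of _ "Inl a1"] exI[of _ "Inl b1"] exI[of _ h] exI[of _ h'] conjI)
    next
      case b
      obtain h h' where hh: "h \<in> T" "h' \<in> B v" "{h, h'} \<in> edges H" using E(8) v(2) by blast
      have "h \<in> B' (Inr False)" "h' \<in> B' (Inr True)" using hh unfolding B'_def by simp_all
      moreover have "e = {Inr False, Inr True}" using b by (simp add: insert_commute)
      ultimately show ?thesis using hh(3)
        by (intro exI[of _ "Inr False"] exI[of _ "Inr True"] exI[of _ h] exI[of _ h'] conjI)
    next
      case c
      have an: "a \<in> nbrs G v" "a \<noteq> p" "a \<noteq> q" using c(1) unfolding N1_def by auto
      have ae: "{v, a} \<in> edges G" using an(1) unfolding nbrs_iff by (simp add: insert_commute)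
      have "{v, a} \<notin> R"
      proof
        assume "{v, a} \<in> R"
        then have "{v, a} = {v, p} \<or> {v, a} = {v, q}" using R by auto
        then show False using an nv[OF an(1)] by (auto simp: doubleton_eq_iff)
      qed
      then have "\<exists>a1 b1 h h'. {v, a} = {a1, b1} \<and> h \<in> B a1 \<and> h' \<in> B b1 \<and> {h, h'} \<in> edges H"
        using r ae by blast
      then obtain a1 b1 h h' where ab: "{v, a} = {a1, b1}" "h \<in> B a1" "h' \<in> B b1" "{h, h'} \<in> edges H"
        by (elim exE conjE)
      have "(a1 = v \<and> b1 = a) \<or> (a1 = a \<and> b1 = v)" using ab(1) by (auto simp: doubleton_eq_iff)
      then show ?thesis
      proof
        assume h1: "a1 = v \<and> b1 = a"
        have "h \<in> B' (Inr True)" "h' \<in> B' (Inl a)" using ab h1 unfolding B'_def by simp_all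
        then show ?thesis using c(2) ab(4)
          by (intro exI[of _ "Inr True"] exI[of _ "Inl a"] exI[of _ h] exI[of _ h'] conjI)
      next
        assume h1: "a1 = a \<and> b1 = v"
        have "h \<in> B' (Inl a)" "h' \<in> B' (Inr True)" using ab h1 unfolding B'_def by simp_all
        moreover have "e = {Inl a, Inr True}" using c(2) by (simp add: insert_commute)
        ultimately show ?thesis using ab(4)
          by (intro exI[of _ "Inl a"] exI[of _ "Inr True"] exI[of _ h] exI[of _ h'] conjI)
      qed
    next
      case d
      have "b \<in> A" using d(1) v(3,4) unfolding N2_def by auto
      then obtain h h' where hh: "h \<in> T" "h' \<in> B b" "{h, h'} \<in> edges H" using E(8) by blast
      have "h \<in> B' (Inr False)" "h' \<in> B' (Inl b)" using hh unfolding B'_def by simp_all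
      then show ?thesis using d(2) hh(3)
        by (intro exI[of _ "Inr False"] exI[of _ "Inl b"] exI[of _ h] exI[of _ h'] conjI)
    qed
  qed
  then show ?thesis using e3 by blast
qed



lemma P3_dist: "P3 D l0 l1 l2 \<Longrightarrow> l0 \<noteq> l1 \<and> l0 \<noteq> l2 \<and> l1 \<noteq> l2"
  unfolding P3_def by blast

lemma cA_sub: "chok G l k z \<Longrightarrow> isloc G l \<Longrightarrow> ugraph G \<Longrightarrow> cA l k z \<subseteq> verts G"
  unfolding chok_def cA_def isloc_def by (auto split: if_splits dest: edge_sub)

theorem lemma5p3:
  fixes G :: "'a ugr" and H :: "'b ugr" and S :: "'b ugr"
    and D :: "'a set set set" and phi :: "'a \<Rightarrow> 'b" and P :: "'a set \<Rightarrow> 'b list"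
  assumes "ugraph G" and "ugraph H"
    and "connected_graph G" and "card (verts G) \<ge> 5"
    and "\<forall>v\<in>verts G. deg G v \<noteq> 2"
    and "weak_disk_system G D"
    and "subgraph S H" and "subdivision_model G S phi P"
    and "has_triad H S D P"
  shows "\<exists>K :: ('a + bool) ugr. has_minor H K \<and>
           (enlargement1 G D K \<or> enlargement3 G D K \<or>
            weak_enlargement8 G D K \<or> weak_enlargement9 G D K)"
proof -
  interpret g: gs G D using assms(1,3,4,5,6) by unfold_locales
  obtain x and L :: "nat \<Rightarrow> 'b list" where x: "x \<in> verts H - verts S"
    and Lp: "\<forall>i<3. is_path H (L i) \<and> hd (L i) = x \<and> last (L i) \<in> verts S \<and>
            interior (L i) \<inter> verts S = {}"
    and pc: "\<forall>i<3. \<forall>j<3. \<exists>C\<in>D. last (L i) \<in> induced_dverts P C \<and> last (L j) \<in> induced_dverts P C"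
    and np: "\<not> (\<exists>C\<in>D. \<forall>i<3. last (L i) \<in> induced_dverts P C)"
    using assms(9) unfolding has_triad_def
    apply (elim exE conjE)
    apply (rule that)
       apply assumption+
    done
  interpret h0: hs0 G H S phi P x L
    by unfold_locales (use assms(1,7,8) x Lp in auto)
  define l where "l i = locf G phi P (last (L i))" for i
  have leq: "h0.loc i = l i" for i unfolding h0.loc_def h0.y_def l_def by simp
  have isl: "isloc G (l i)" if i: "i < 3" for i
  proof (cases "h0.loc i \<in> edges G")
    case True then show ?thesis unfolding isloc_def leq by simp
  next
    case False then show ?thesis using h0.loc_V[OF i False] unfolding isloc_def leq by blast
  qed
  have hi: "last (L i) \<in> induced_dverts P C \<longleftrightarrow> hold C (l i)" if "i < 3" "C \<in> D" for i C
    using h0.hold_ind[OF that(1) g.dE[OF that(2)]] unfolding h0.y_def leq .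
  have pc': "\<exists>C\<in>D. hold C (l i) \<and> hold C (l j)" if ij: "i < 3" "j < 3" for i j
  proof -
    obtain C where C: "C \<in> D" "last (L i) \<in> induced_dverts P C" "last (L j) \<in> induced_dverts P C"
      using pc ij by blast
    then show ?thesis using hi[OF ij(1) C(1)] hi[OF ij(2) C(1)] by blast
  qed
  have P3: "P3 D (l 0) (l 1) (l 2)" unfolding P3_def
  proof (intro conjI)
    show "\<exists>C\<in>D. hold C (l 0) \<and> hold C (l 1)" using pc'[of 0 1] by simp
    show "\<exists>C\<in>D. hold C (l 0) \<and> hold C (l 2)" using pc'[of 0 2] by simp
    show "\<exists>C\<in>D. hold C (l 1) \<and> hold C (l 2)" using pc'[of 1 2] by simp
    show "\<not> (\<exists>C\<in>D. hold C (l 0) \<and> hold C (l 1) \<and> hold C (l 2))"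
    proof
      assume "\<exists>C\<in>D. hold C (l 0) \<and> hold C (l 1) \<and> hold C (l 2)"
      then obtain C where C: "C \<in> D" "hold C (l 0)" "hold C (l 1)" "hold C (l 2)" by blast
      have "\<forall>i<3. last (L i) \<in> induced_dverts P C"
      proof (intro allI impI)
        fix i :: nat assume i: "i < 3"
        then have "i = 0 \<or> i = 1 \<or> i = 2" by auto
        then have "hold C (l i)" using C by auto
        then show "last (L i) \<in> induced_dverts P C" using hi[OF i C(1)] by simp
      qed
      then show False using np C(1) by blast
    qed
  qed
  have Gd: "Good G D (l 0) (l 1) (l 2)" by (rule g.comb_main[OF isl isl isl P3]) simp_all
  then obtain k0 z0 k1 z1 k2 z2 where c: "chok G (l 0) k0 z0" "chok G (l 1) k1 z1" "chok G (l 2) k2 z2"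
    and tg: "target G D (cA (l 0) k0 z0 \<union> cA (l 1) k1 z1 \<union> cA (l 2) k2 z2) (cR (l 0) k0 \<union> cR (l 1) k1 \<union> cR (l 2) k2)"
    unfolding Good_def by blast
  have dl: "l 0 \<noteq> l 1" "l 0 \<noteq> l 2" "l 1 \<noteq> l 2" using P3_dist[OF P3] by auto
  define kk where "kk i = (if i = 0 then k0 else if i = 1 then k1 else k2)" for i :: nat
  define zz where "zz i = (if i = 0 then z0 else if i = 1 then z1 else z2)" for i :: nat
  interpret h: hsc G H S phi P x L kk zz
  proof unfold_locales
    fix i :: nat assume i: "i < 3"
    then have "i = 0 \<or> i = 1 \<or> i = 2" by auto
    then show "chok G (locf G phi P (last (L i))) (kk i) (zz i)"
      using c unfolding kk_def zz_def l_def by auto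
  next
    fix i j :: nat assume "i < 3" "j < 3" "i \<noteq> j"
    then have "(i = 0 \<or> i = 1 \<or> i = 2) \<and> (j = 0 \<or> j = 1 \<or> j = 2)" by auto
    then show "locf G phi P (last (L i)) \<noteq> locf G phi P (last (L j))"
      using dl \<open>i \<noteq> j\<close> unfolding l_def by auto
  qed
  have hl: "h0.loc i = l i" for i by (rule leq)
  have em: "ext_model H G h.BB h.TT (cR (l 0) k0 \<union> cR (l 1) k1 \<union> cR (l 2) k2)
      (cA (l 0) k0 z0 \<union> cA (l 1) k1 z1 \<union> cA (l 2) k2 z2)"
    using h.ext unfolding hl kk_def zz_def by simp
  have AV: "cA (l 0) k0 z0 \<union> cA (l 1) k1 z1 \<union> cA (l 2) k2 z2 \<subseteq> verts G"
    using cA_sub[OF c(1) isl assms(1)] cA_sub[OF c(2) isl assms(1)] cA_sub[OF c(3) isl assms(1)] by simp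
  show ?thesis using tg unfolding target_def
  proof (elim disjE conjE exE)
    fix x1 x2 x3
    assume R: "cR (l 0) k0 \<union> cR (l 1) k1 \<union> cR (l 2) k2 = {}"
      and h: "x1 \<in> cA (l 0) k0 z0 \<union> cA (l 1) k1 z1 \<union> cA (l 2) k2 z2"
        "x2 \<in> cA (l 0) k0 z0 \<union> cA (l 1) k1 z1 \<union> cA (l 2) k2 z2"
        "x3 \<in> cA (l 0) k0 z0 \<union> cA (l 1) k1 z1 \<union> cA (l 2) k2 z2"
        "x1 \<noteq> x2" "x1 \<noteq> x3" "x2 \<noteq> x3" "\<not> (\<exists>C\<in>D. {x1, x2, x3} \<subseteq> dverts C)"
    have "\<exists>K :: ('a + bool) ugr. has_minor H K \<and> weak_enlargement8 G D K"
      by (rule ext8[OF em[unfolded R] h(1-3) _ _ _ h(4-7)]) (use AV h(1-3) in auto)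
    then show ?thesis by blast
  next
    fix v p q
    assume h: "v \<in> cA (l 0) k0 z0 \<union> cA (l 1) k1 z1 \<union> cA (l 2) k2 z2"
      "p \<in> cA (l 0) k0 z0 \<union> cA (l 1) k1 z1 \<union> cA (l 2) k2 z2"
      "q \<in> cA (l 0) k0 z0 \<union> cA (l 1) k1 z1 \<union> cA (l 2) k2 z2"
      "p \<noteq> q" "p \<in> nbrs G v" "q \<in> nbrs G v"
      "cR (l 0) k0 \<union> cR (l 1) k1 \<union> cR (l 2) k2 \<subseteq> {{v, p}, {v, q}}" "4 \<le> deg G v"
      "\<not> conforming_split G D v (nbrs G v - {p, q}) {p, q}"
    have "v \<in> verts G" using AV h(1) by blast
    then have "\<exists>K :: ('a + bool) ugr. has_minor H K \<and> enlargement3 G D K"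
      by (rule extS[OF assms(1) em _ h(1-9)])
    then show ?thesis by blast
  qed
qed


end
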